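(* Consider conditional geometric resampling (CGR) at round $t$. For each base-arm $i$ with $a_{t,i}=1$ and $\sigma_i>m$, each sample $r''_t$ used by CGR for base-arm $i$ follows the conditional distribution of $\mathcal{D}^d$ given $$\mathcal{E}_{t,i}=\left\{\left|\{j:r''_{t,j}\ge r''_{t,i},\ \sigma_j\le\sigma_i\}\right|\le m\right\}.$$ In addition, for any $i\in[d]$ with $a_{t,i}=1$, the output $\widehat{w_{t,i}^{-1}}=\left(\frac{\sigma_i}{m}\vee1\right)M_{t,i}$ is an unbiased estimator of $w_{t,i}^{-1}$, i.e. $\mathbb{E}[\widehat{w_{t,i}^{-1}}\mid\hat L_t,a_{t,i}=1]=1/w_{t,i}$, and the total number $M_t$ of resampling iterations satisfies $$\mathbb{E}[M_t\mid\hat L_t]\le m+m\log(d/m).$$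
   Context: Size-invariant semi-bandit with $1\le m\le d$ and $\mathcal{A}=\{a\in\{0,1\}^d:\|a\|_1=m\}$. FTPL with learning rate $\eta>0$ and perturbation distribution $\mathcal{D}$ on $\mathbb{R}$ (continuous, e.g. Fréchet or Pareto), $\mathcal{D}^d$ the law of a vector with i.i.d. coordinates from $\mathcal{D}$; in round $t$, with cumulative estimated loss $\hat L_t$, the played action is $a_t\in\arg\min_{a\in\mathcal{A}}a^\top(\eta\hat L_t-r_t)$, $r_t\sim\mathcal{D}^d$, and $w_{t,i}$ is the probability given $\hat L_t$ that $a_{t,i}=1$. $\sigma_j$ denotes the number of arms $k$ (including $j$) with $\hat L_{t,k}\le\hat L_{t,j}$, ties broken arbitrarily so that $\sigma$ is a permutation of $[d]$. $a\vee b=\max(a,b)$. CGR procedure (given $a_t,\hat L_t,\eta$): set $K=0\in\mathbb{R}^d$, $s=a_t$, $U=\{i:a_{t,i}=1,\sigma_i>m\}$, $C_i=\sigma_i/m$ for $i\in U$ and $C_i=1$ otherwise. Repeat: {$K\leftarrow K+s$; draw $r'\sim\mathcal{D}^d$ independently; $a'\in\arg\min_{a\in\mathcal{A}}a^\top(\eta\hat L_t-r')$; draw $\theta$ uniformly from $[m]$; for each $i\in U$: let $i'$ be such that $r'_{i'}$ is the $\theta$-th largest in $\{r'_j:\sigma_j\le\sigma_i\}$, let $r''$ be $r'$ with coordinates $i$ and $i'$ swapped, reset $a'_i=[\arg\min_{a\in\mathcal{A}}a^\top(\eta\hat L_t-r'')]_i$, and if $a'_i=1$ remove $i$ from $U$;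 then $s\leftarrow s\circ(\mathbf 1_d-a')$} until $s=0$. Output $\widehat{w_{t,i}^{-1}}=C_iK_i$ for all $i$ with $a_{t,i}=1$. Here $M_{t,i}=K_i$ is the number of iterations until $s_i$ becomes $0$, and $M_t=\max_{i:a_{t,i}=1}M_{t,i}$ is the total number of iterations. *)

theory Defs
  imports "HOL-Probability.Probability"
begin

text \<open>Base arms are indexed by 0..d-1 (i.e. the set lessThan d).
  Vectors in R^d are functions nat => real; perturbation vectors live in the
  product measure PiM over lessThan d.\<close>

text \<open>Score of arm j: minimising a^T(eta L - r) over actions with exactly m ones
  is the same as picking m arms of largest score r_j - eta L_j.\<close>
definition score :: "real \<Rightarrow> (nat \<Rightarrow> real) \<Rightarrow> (nat \<Rightarrow> real) \<Rightarrow> nat \<Rightarrow> real" where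
  "score \<eta> L r j = r j - \<eta> * L j"

text \<open>FTPL action (coordinate i of the argmin action), with ties broken by index:
  arm i is played iff fewer than m arms beat it in the order (larger score, then smaller index).
  This is an element of argmin over the action set; ties occur with probability 0.\<close>
definition ftpl_act :: "nat \<Rightarrow> nat \<Rightarrow> real \<Rightarrow> (nat \<Rightarrow> real) \<Rightarrow> (nat \<Rightarrow> real) \<Rightarrow> nat \<Rightarrow> bool" where
  "ftpl_act d m \<eta> L r i \<longleftrightarrow>
     card {j \<in> {..<d}. score \<eta> L r j > score \<eta> L r i \<or> (score \<eta> L r j = score \<eta> L r i \<and> j < i)} < m"

text \<open>The index of the theta-th largest (theta = 1,2,...) value of r on S (ties broken by index).\<close>
definition kth_largest :: "nat set \<Rightarrow> (nat \<Rightarrow> real) \<Rightarrow> nat \<Rightarrow> nat" where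
  "kth_largest S r \<theta> = (THE j. j \<in> S \<and> card {k \<in> S. r k > r j \<or> (r k = r j \<and> k < j)} = \<theta> - 1)"

definition cgr_swap :: "nat \<Rightarrow> (nat \<Rightarrow> nat) \<Rightarrow> nat \<Rightarrow> (nat \<Rightarrow> real) \<Rightarrow> nat \<Rightarrow> (nat \<Rightarrow> real)" where
  "cgr_swap d \<sigma> i r \<theta> =
     (let i' = kth_largest {j \<in> {..<d}. \<sigma> j \<le> \<sigma> i} r \<theta> in r(i := r i', i' := r i))"

definition pert :: "nat \<Rightarrow> real measure \<Rightarrow> (nat \<Rightarrow> real) measure" where
  "pert d D = PiM {..<d} (\<lambda>_. D)"

text \<open>Probability space of round t given hat L_t: the FTPL perturbation r_t together with
  an i.i.d. sequence of CGR draws (r', theta), r' ~ D^d, theta uniform on 1..m.\<close>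
definition cgr_space :: "nat \<Rightarrow> nat \<Rightarrow> real measure \<Rightarrow> ((nat \<Rightarrow> real) \<times> ((nat \<Rightarrow> real) \<times> nat) stream) measure" where
  "cgr_space d m D = pert d D \<Otimes>\<^sub>M stream_space (pert d D \<Otimes>\<^sub>M measure_pmf (pmf_of_set {1..m}))"

text \<open>Value of a'_i produced by one CGR iteration with draw x = (r', theta): arms in U
  (a_{t,i} = 1 and sigma_i > m) use the swapped sample r'', the other arms use r'.\<close>
definition cgr_hit :: "nat \<Rightarrow> nat \<Rightarrow> real \<Rightarrow> (nat \<Rightarrow> real) \<Rightarrow> (nat \<Rightarrow> nat) \<Rightarrow> nat \<Rightarrow> (nat \<Rightarrow> real) \<times> nat \<Rightarrow> bool" where
  "cgr_hit d m \<eta> L \<sigma> i x =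
     (if m < \<sigma> i then ftpl_act d m \<eta> L (cgr_swap d \<sigma> i (fst x) (snd x)) i
      else ftpl_act d m \<eta> L (fst x) i)"

text \<open>M_{t,i} = K_i: number of iterations until s_i becomes 0 (iterations counted from 1).\<close>
definition cgr_M :: "nat \<Rightarrow> nat \<Rightarrow> real \<Rightarrow> (nat \<Rightarrow> real) \<Rightarrow> (nat \<Rightarrow> nat) \<Rightarrow> nat
    \<Rightarrow> (nat \<Rightarrow> real) \<times> ((nat \<Rightarrow> real) \<times> nat) stream \<Rightarrow> nat" where
  "cgr_M d m \<eta> L \<sigma> i \<omega> = Suc (LEAST k. cgr_hit d m \<eta> L \<sigma> i (snd \<omega> !! k))"

definition cgr_Mtot :: "nat \<Rightarrow> nat \<Rightarrow> real \<Rightarrow> (nat \<Rightarrow> real) \<Rightarrow> (nat \<Rightarrow> nat)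
    \<Rightarrow> (nat \<Rightarrow> real) \<times> ((nat \<Rightarrow> real) \<times> nat) stream \<Rightarrow> nat" where
  "cgr_Mtot d m \<eta> L \<sigma> \<omega> = Max {cgr_M d m \<eta> L \<sigma> i \<omega> | i. i < d \<and> ftpl_act d m \<eta> L (fst \<omega>) i}"

definition cgr_est :: "nat \<Rightarrow> nat \<Rightarrow> real \<Rightarrow> (nat \<Rightarrow> real) \<Rightarrow> (nat \<Rightarrow> nat) \<Rightarrow> nat
    \<Rightarrow> (nat \<Rightarrow> real) \<times> ((nat \<Rightarrow> real) \<times> nat) stream \<Rightarrow> real" where
  "cgr_est d m \<eta> L \<sigma> i \<omega> = max (real (\<sigma> i) / real m) 1 * real (cgr_M d m \<eta> L \<sigma> i \<omega>)"

definition ftpl_w :: "nat \<Rightarrow> nat \<Rightarrow> real measure \<Rightarrow> real \<Rightarrow> (nat \<Rightarrow> real) \<Rightarrow> nat \<Rightarrow> real" where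
  "ftpl_w d m D \<eta> L i = measure (pert d D) {r \<in> space (pert d D). ftpl_act d m \<eta> L r i}"

definition cgr_event :: "nat \<Rightarrow> nat \<Rightarrow> real measure \<Rightarrow> (nat \<Rightarrow> nat) \<Rightarrow> nat \<Rightarrow> (nat \<Rightarrow> real) set" where
  "cgr_event d m D \<sigma> i =
     {r \<in> space (pert d D). card {j \<in> {..<d}. r j \<ge> r i \<and> \<sigma> j \<le> \<sigma> i} \<le> m}"

end

theory Submission
  imports Defs
begin

definition beats :: "(nat \<Rightarrow> real) \<Rightarrow> nat \<Rightarrow> nat \<Rightarrow> bool" where
  "beats r k j \<longleftrightarrow> r k > r j \<or> (r k = r j \<and> k < j)"

definition rk :: "nat set \<Rightarrow> (nat \<Rightarrow> real) \<Rightarrow> nat \<Rightarrow> nat" where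
  "rk S r j = card {k\<in>S. beats r k j}"

lemma beats_irrefl: "\<not> beats r j j" by (auto simp: beats_def)
lemma beats_trans: "beats r a b \<Longrightarrow> beats r b c \<Longrightarrow> beats r a c" by (auto simp: beats_def)
lemma beats_total: "a \<noteq> b \<Longrightarrow> beats r a b \<or> beats r b a" by (auto simp: beats_def)

lemma rk_less: assumes "finite S" "j \<in> S" shows "rk S r j < card S"
  unfolding rk_def
proof (rule psubset_card_mono)
  show "{k \<in> S. beats r k j} \<subset> S" using assms beats_irrefl by blast
qed (use assms in auto)

lemma rk_mono: assumes "finite S" "j \<in> S" "beats r j k" shows "rk S r j < rk S r k"
  unfolding rk_def
proof (rule psubset_card_mono)
  show "{ka \<in> S. beats r ka j} \<subset> {ka \<in> S. beats r ka k}"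
    using assms beats_trans beats_irrefl by blast
qed (use assms in auto)

lemma rk_inj: "finite S \<Longrightarrow> inj_on (rk S r) S"
  unfolding inj_on_def
  by (metis beats_total less_irrefl rk_mono)

lemma rk_bij: assumes "finite S" shows "bij_betw (rk S r) S {..<card S}"
proof (rule bij_betw_imageI[OF rk_inj[OF assms]])
  have "rk S r ` S \<subseteq> {..<card S}" using rk_less[OF assms] by auto
  moreover have "card (rk S r ` S) = card {..<card S}"
    using card_image[OF rk_inj[OF assms]] by simp
  ultimately show "rk S r ` S = {..<card S}"
    by (intro card_subset_eq) auto
qed

locale cgrl =
  fixes d m :: nat and D :: "real measure"
  assumes m1: "1 \<le> m" and md: "m \<le> d"
    and PD: "prob_space D" and sD: "sets D = sets borel"
    and atom: "\<And>x. emeasure D {x} = 0"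
begin

abbreviation "P \<equiv> pert d D"

lemma probP: "prob_space P"
  unfolding pert_def by (intro prob_space_PiM PD)

lemma comp_meas[measurable]: "k < d \<Longrightarrow> (\<lambda>r. r k) \<in> borel_measurable P"
  unfolding pert_def
  using measurable_component_singleton[of k "{..<d}" "\<lambda>_. D"]
  by (simp add: measurable_cong_sets[OF refl sD])

lemma tie_null:
  assumes j: "j < d" and k: "k < d" and jk: "j \<noteq> k"
  shows "AE r in P. r j \<noteq> r k"
proof -
  interpret PS: product_sigma_finite "\<lambda>_. D"
    unfolding product_sigma_finite_def using PD prob_space_imp_sigma_finite by blast
  have ins: "insert j ({..<d} - {j}) = {..<d}" using j by auto
  let ?N = "{r\<in>space P. r j = r k}"
  have N[measurable]: "?N \<in> sets P" using j k by measurable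
  have "emeasure P ?N = (\<integral>\<^sup>+ r. indicator ?N r \<partial>P)" using N by simp
  also have "\<dots> = (\<integral>\<^sup>+ x. (\<integral>\<^sup>+ y. indicator ?N (x(j := y)) \<partial>D) \<partial>(Pi\<^sub>M ({..<d} - {j}) (\<lambda>_. D)))"
    using PS.product_nn_integral_insert[of "{..<d} - {j}" j "indicator ?N"] N
    unfolding pert_def ins by simp
  also have "\<dots> = (\<integral>\<^sup>+ x. 0 \<partial>(Pi\<^sub>M ({..<d} - {j}) (\<lambda>_. D)))"
  proof (rule nn_integral_cong)
    fix x assume x: "x \<in> space (Pi\<^sub>M ({..<d} - {j}) (\<lambda>_. D))"
    have "(\<integral>\<^sup>+ y. indicator ?N (x(j := y)) \<partial>D) = (\<integral>\<^sup>+ y. indicator {x k} y \<partial>D)"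
    proof (rule nn_integral_cong)
      fix y assume y: "y \<in> space D"
      have "x(j := y) \<in> space P"
        using x y j unfolding pert_def by (auto simp: space_PiM PiE_iff extensional_def)
      then show "indicator ?N (x(j := y)) = indicator {x k} y"
        using jk by (auto simp: indicator_def)
    qed
    also have "\<dots> = 0" using atom sD by (simp add: sets_eq_imp_space_eq)
    finally show "(\<integral>\<^sup>+ y. indicator ?N (x(j := y)) \<partial>D) = 0" .
  qed
  finally have "emeasure P ?N = 0" by simp
  then show ?thesis
    by (subst AE_iff_measurable[OF N]) auto
qed

definition "noties r \<longleftrightarrow> (\<forall>j<d. \<forall>k<d. j \<noteq> k \<longrightarrow> r j \<noteq> r k)"

lemma AE_noties: "AE r in P. noties r"
proof -
  have "AE r in P. \<forall>j\<in>{..<d}. \<forall>k\<in>{..<d}. j \<noteq> k \<longrightarrow> r j \<noteq> r k"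
    by (intro AE_finite_allI) (auto intro: tie_null)
  then show ?thesis unfolding noties_def by auto
qed

lemma noties_meas[measurable]: "Measurable.pred P noties"
proof -
  have eq: "noties = (\<lambda>r. \<forall>j\<in>{..<d}. \<forall>k\<in>{..<d} - {j}. r j \<noteq> r k)"
    by (auto simp: noties_def fun_eq_iff)
  have *: "Measurable.pred P (\<lambda>r. r j \<noteq> r k)" if "j < d" "k < d" for j k
  proof -
    have "{r \<in> space P. r j = r k} \<in> sets P" using that by measurable
    then have "{r \<in> space P. \<not> r j = r k} \<in> sets P" by (rule sets.sets_Collect_neg)
    then show ?thesis unfolding pred_def by simp
  qed
  have **: "Measurable.pred P (\<lambda>r. \<forall>k\<in>{..<d} - {j}. r j \<noteq> r k)" if "j < d" for j
    by (rule pred_intros_finite(3)) (auto intro!: * that)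
  show ?thesis unfolding eq
    by (rule pred_intros_finite(3)) (auto intro!: **)
qed

end

lemma card_meas:
  assumes "finite S" "\<And>k. k \<in> S \<Longrightarrow> Measurable.pred M (Q k)"
  shows "(\<lambda>r. card {k\<in>S. Q k r}) \<in> measurable M (count_space UNIV)"
  using assms
proof (induction S rule: finite_induct)
  case empty then show ?case by simp
next
  case (insert a S)
  have eq: "card {k\<in>insert a S. Q k r} = (if Q a r then 1 else 0) + card {k\<in>S. Q k r}" for r
  proof -
    have "{k\<in>insert a S. Q k r} = (if Q a r then insert a {k\<in>S. Q k r} else {k\<in>S. Q k r})" by auto
    then show ?thesis using insert by auto
  qed
  have [measurable]: "Measurable.pred M (Q a)" using insert by auto
  have [measurable]: "(\<lambda>r. card {k\<in>S. Q k r}) \<in> measurable M (count_space UNIV)" using insert by auto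
  show ?case unfolding eq by measurable
qed

definition tr :: "nat \<Rightarrow> nat \<Rightarrow> (nat \<Rightarrow> real) \<Rightarrow> (nat \<Rightarrow> real)" where
  "tr i j r = r(i := r j, j := r i)"

lemma tr_tr: "tr i j (tr i j r) = r"
  by (auto simp: tr_def fun_eq_iff)

lemma rk_tr:
  assumes nt: "\<And>a b. a \<in> S \<Longrightarrow> b \<in> S \<Longrightarrow> a \<noteq> b \<Longrightarrow> r a \<noteq> r b"
    and i: "i \<in> S" and j: "j \<in> S"
  shows "rk S (tr i j r) j = rk S r i"
proof -
  define f where "f n = (if n = i then j else if n = j then i else n)" for n
  have ff: "f (f n) = n" for n by (auto simp: f_def)
  have trf: "tr i j r n = r (f n)" for n by (auto simp: tr_def f_def)
  have fS: "f ` S = S"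
  proof
    show "f ` S \<subseteq> S" using i j by (auto simp: f_def)
    show "S \<subseteq> f ` S"
    proof
      fix x assume "x \<in> S"
      then have "f x \<in> S" using i j by (auto simp: f_def)
      then show "x \<in> f ` S" using ff[of x] by (metis imageI)
    qed
  qed
  have b1: "beats r a b \<longleftrightarrow> r a > r b" if "a \<in> S" "b \<in> S" for a b
    using nt[OF that] that by (cases "a = b") (auto simp: beats_def)
  have "{k\<in>S. beats (tr i j r) k j} = {k\<in>S. r (f k) > r i}"
  proof -
    have "beats (tr i j r) k j \<longleftrightarrow> r (f k) > r i" if "k \<in> S" for k
    proof -
      have fk: "f k \<in> S" using that fS by auto
      show ?thesis
      proof (cases "k = j")
        case True then show ?thesis by (auto simp: beats_def trf f_def)
      next
        case False
        then have "f k \<noteq> i" using ff by (metis f_def)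
        then have "r (f k) \<noteq> r i" using nt fk i by blast
        moreover have "tr i j r j = r i" by (simp add: trf f_def)
        ultimately show ?thesis by (auto simp: beats_def trf)
      qed
    qed
    then show ?thesis by auto
  qed
  moreover have "bij_betw f {k\<in>S. r (f k) > r i} {k\<in>S. beats r k i}"
  proof (rule bij_betw_byWitness[where f'=f])
    show "\<forall>a\<in>{k \<in> S. r i < r (f k)}. f (f a) = a" using ff by auto
    show "\<forall>a'\<in>{k \<in> S. beats r k i}. f (f a') = a'" using ff by auto
    show "f ` {k \<in> S. r i < r (f k)} \<subseteq> {k \<in> S. beats r k i}"
      using fS b1 i by auto
    show "f ` {k \<in> S. beats r k i} \<subseteq> {k \<in> S. r i < r (f k)}"
      using fS b1 i ff by auto
  qed
  ultimately show ?thesis unfolding rk_def by (simp add: bij_betw_same_card)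
qed

context cgrl begin

lemma comp_eq_pred: "j < d \<Longrightarrow> k < d \<Longrightarrow> Measurable.pred P (\<lambda>r. r j = r k)"
proof -
  assume a: "j < d" "k < d"
  have "{r \<in> space P. r j = r k} \<in> sets P" using a by measurable
  then show ?thesis unfolding pred_def by simp
qed

lemma comp_less_pred: "j < d \<Longrightarrow> k < d \<Longrightarrow> Measurable.pred P (\<lambda>r. r j < r k)"
proof -
  assume a: "j < d" "k < d"
  have "{r \<in> space P. r j < r k} \<in> sets P" using a by measurable
  then show ?thesis unfolding pred_def by simp
qed

lemma beats_pred: "j < d \<Longrightarrow> k < d \<Longrightarrow> Measurable.pred P (\<lambda>r. beats r k j)"
  unfolding beats_def
  by (intro pred_intros_logic(5) pred_intros_logic(3) comp_eq_pred comp_less_pred measurable_const) auto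

lemma rk_meas: "S \<subseteq> {..<d} \<Longrightarrow> j < d \<Longrightarrow> (\<lambda>r. rk S r j) \<in> measurable P (count_space UNIV)"
  unfolding rk_def
  by (rule card_meas) (auto intro: finite_subset beats_pred)

lemma tr_meas: assumes "i < d" "j < d" shows "tr i j \<in> measurable P P"
proof -
  have eq: "tr i j = (\<lambda>r n. if n = j then r i else if n = i then r j else r n)"
    by (auto simp: tr_def fun_eq_iff)
  have c: "(\<lambda>r. r n) \<in> measurable P D" if "n < d" for n
    unfolding pert_def using that by (intro measurable_component_singleton) auto
  show ?thesis unfolding eq pert_def
    apply (rule measurable_PiM_single')
    subgoal for n using c[of n] c[OF assms(1)] c[OF assms(2)] unfolding pert_def
      by (cases "n = j"; cases "n = i") simp_all
    subgoal using assms by (auto simp: space_PiM PiE_iff extensional_def)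
    done
qed

lemma space_P_ext: "\<omega> \<in> space P \<Longrightarrow> n \<notin> {..<d} \<Longrightarrow> \<omega> n = undefined"
  unfolding pert_def space_PiM PiE_def extensional_def by blast

lemma tr_inv: assumes "i < d" "j < d" shows "distr P P (tr i j) = P"
proof -
  define f where "f n = (if n = i then j else if n = j then i else n)" for n
  have ff: "f (f n) = n" for n by (auto simp: f_def)
  have inj: "inj_on f {..<d}" by (metis ff inj_onI)
  have fI: "f \<in> {..<d} \<rightarrow> {..<d}" using assms by (auto simp: f_def)
  have "distr P P (\<lambda>\<omega>. \<lambda>n\<in>{..<d}. \<omega> (f n)) = P"
    unfolding pert_def
    using distr_PiM_reindex[of "{..<d}" "\<lambda>_. D" f "{..<d}", OF PD inj fI] by simp
  moreover have "distr P P (\<lambda>\<omega>. \<lambda>n\<in>{..<d}. \<omega> (f n)) = distr P P (tr i j)"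
  proof (rule distr_cong[OF refl refl])
    fix \<omega> assume w: "\<omega> \<in> space P"
    show "(\<lambda>n\<in>{..<d}. \<omega> (f n)) = tr i j \<omega>"
    proof
      fix n
      show "(\<lambda>n\<in>{..<d}. \<omega> (f n)) n = tr i j \<omega> n"
      proof (cases "n < d")
        case True then show ?thesis by (simp add: f_def tr_def)
      next
        case False
        then have "n \<noteq> i" "n \<noteq> j" using assms by auto
        then show ?thesis using False space_P_ext[OF w, of n] by (simp add: tr_def)
      qed
    qed
  qed
  ultimately show ?thesis by simp
qed

lemma tr_emeasure: assumes "i < d" "j < d" "A \<in> sets P"
  shows "emeasure P (tr i j -` A \<inter> space P) = emeasure P A"
  using emeasure_distr[OF tr_meas[OF assms(1,2)] assms(3)] tr_inv[OF assms(1,2)] by simp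

end

lemma kth_eq:
  assumes "finite S" "j \<in> S"
  shows "kth_largest S r (Suc (rk S r j)) = j"
proof -
  have "(THE j'. j' \<in> S \<and> rk S r j' = rk S r j) = j"
    using rk_inj[OF assms(1), of r] assms(2) by (auto simp: inj_on_def)
  then show ?thesis unfolding kth_largest_def rk_def beats_def by simp
qed

lemma kth_in:
  assumes "finite S" "1 \<le> \<theta>" "\<theta> \<le> card S"
  shows "kth_largest S r \<theta> \<in> S \<and> rk S r (kth_largest S r \<theta>) = \<theta> - 1"
proof -
  have "\<theta> - 1 \<in> {..<card S}" using assms by auto
  then obtain j where j: "j \<in> S" "rk S r j = \<theta> - 1"
    using rk_bij[OF assms(1), of r] unfolding bij_betw_def by (metis imageE)
  then show ?thesis using kth_eq[OF assms(1) j(1), of r] assms by simp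
qed

lemma kth_iff:
  assumes "finite S" "1 \<le> \<theta>" "\<theta> \<le> card S"
  shows "kth_largest S r \<theta> = j \<longleftrightarrow> j \<in> S \<and> rk S r j = \<theta> - 1"
  using kth_in[OF assms, of r] kth_eq[OF assms(1), of j r] assms by auto

context cgrl begin

lemma rk_set: "S \<subseteq> {..<d} \<Longrightarrow> j < d \<Longrightarrow> {r\<in>space P. rk S r j = c} \<in> sets P"
proof -
  assume a: "S \<subseteq> {..<d}" "j < d"
  have "{r\<in>space P. rk S r j = c} = (\<lambda>r. rk S r j) -` {c} \<inter> space P" by auto
  then show ?thesis using measurable_sets[OF rk_meas[OF a], of "{c}"] by simp
qed

lemma tr_set: "i < d \<Longrightarrow> j < d \<Longrightarrow> B \<in> sets P \<Longrightarrow> tr i j -` B \<inter> space P \<in> sets P"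
  by (rule measurable_sets[OF tr_meas])

lemma core:
  assumes S: "S \<subseteq> {..<d}" and i: "i \<in> S" and th: "1 \<le> \<theta>" "\<theta> \<le> card S" and B: "B \<in> sets P"
  shows "emeasure P {r\<in>space P. tr i (kth_largest S r \<theta>) r \<in> B}
       = of_nat (card S) * emeasure P {r\<in>space P. r \<in> B \<and> rk S r i = \<theta> - 1}"
proof -
  have finS: "finite S" using S finite_subset by blast
  have id: "i < d" using S i by auto
  define F where "F j = {r\<in>space P. rk S r j = \<theta> - 1} \<inter> (tr i j -` B \<inter> space P)" for j
  define G where "G = {r\<in>space P. r \<in> B \<and> rk S r i = \<theta> - 1}"
  have Fm: "F j \<in> sets P" if "j \<in> S" for j
  proof -
    have "j < d" using that S by auto
    then show ?thesis unfolding F_def using rk_set[OF S] tr_set[OF id _ B] by blast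
  qed
  have Gm: "G \<in> sets P"
  proof -
    have "G = B \<inter> {r\<in>space P. rk S r i = \<theta> - 1}" unfolding G_def by auto
    then show ?thesis using rk_set[OF S id] B by auto
  qed
  have decomp: "{r\<in>space P. tr i (kth_largest S r \<theta>) r \<in> B} = (\<Union>j\<in>S. F j)"
  proof (intro equalityI subsetI)
    fix r assume r: "r \<in> {r\<in>space P. tr i (kth_largest S r \<theta>) r \<in> B}"
    let ?c = "kth_largest S r \<theta>"
    have "?c \<in> S" "rk S r ?c = \<theta> - 1" using kth_in[OF finS th] by auto
    then show "r \<in> (\<Union>j\<in>S. F j)" using r unfolding F_def by auto
  next
    fix r assume "r \<in> (\<Union>j\<in>S. F j)"
    then obtain j where j: "j \<in> S" "r \<in> F j" by auto
    then have "kth_largest S r \<theta> = j" using kth_iff[OF finS th] unfolding F_def by auto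
    then show "r \<in> {r\<in>space P. tr i (kth_largest S r \<theta>) r \<in> B}" using j unfolding F_def by auto
  qed
  have disj: "disjoint_family_on F S"
    unfolding disjoint_family_on_def
  proof (intro ballI impI)
    fix a b assume ab: "a \<in> S" "b \<in> S" "a \<noteq> b"
    show "F a \<inter> F b = {}"
    proof (rule ccontr)
      assume "F a \<inter> F b \<noteq> {}"
      then obtain r where "r \<in> F a" "r \<in> F b" by blast
      then have "rk S r a = rk S r b" unfolding F_def by auto
      then show False using rk_inj[OF finS, of r] ab unfolding inj_on_def by blast
    qed
  qed
  have eachF: "emeasure P (F j) = emeasure P G" if j: "j \<in> S" for j
  proof -
    have jd: "j < d" using j S by auto
    have "emeasure P (F j) = emeasure P (tr i j -` F j \<inter> space P)"
      using tr_emeasure[OF id jd Fm[OF j]] by simp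
    also have "\<dots> = emeasure P G"
    proof (rule emeasure_eq_AE)
      show "tr i j -` F j \<inter> space P \<in> sets P" by (rule tr_set[OF id jd Fm[OF j]])
      show "G \<in> sets P" by (rule Gm)
      show "AE x in P. (x \<in> tr i j -` F j \<inter> space P) = (x \<in> G)"
        using AE_noties
      proof eventually_elim
        case (elim s)
        show ?case
        proof (cases "s \<in> space P")
          case True
          have ts: "tr i j s \<in> space P" using measurable_space[OF tr_meas[OF id jd] True] .
          have nt: "\<And>a b. a \<in> S \<Longrightarrow> b \<in> S \<Longrightarrow> a \<noteq> b \<Longrightarrow> s a \<noteq> s b"
            using elim S unfolding noties_def by blast
          have "rk S (tr i j s) j = rk S s i" by (rule rk_tr[OF nt i j])
          then show ?thesis using True ts unfolding F_def G_def by (auto simp: tr_tr)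
        next
          case False then show ?thesis unfolding G_def by auto
        qed
      qed
    qed
    finally show ?thesis .
  qed
  have "emeasure P {r\<in>space P. tr i (kth_largest S r \<theta>) r \<in> B} = (\<Sum>j\<in>S. emeasure P (F j))"
    unfolding decomp using Fm disj finS by (intro sum_emeasure[symmetric]) auto
  also have "\<dots> = (\<Sum>j\<in>S. emeasure P G)" using eachF by simp
  also have "\<dots> = of_nat (card S) * emeasure P G" by simp
  finally show ?thesis unfolding G_def .
qed

end

lemma nat_fun_set:
  assumes "f \<in> measurable M (count_space UNIV)"
  shows "{x\<in>space M. R (f x)} \<in> sets M"
proof -
  have "{x\<in>space M. R (f x)} = f -` {n. R n} \<inter> space M" by auto
  then show ?thesis using measurable_sets[OF assms, of "{n. R n}"] by simp
qed

context cgrl begin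

lemma swap_good_set:
  assumes S: "S \<subseteq> {..<d}" and i: "i \<in> S" and th: "1 \<le> \<theta>" "\<theta> \<le> card S" and B: "B \<in> sets P"
  shows "{r\<in>space P. tr i (kth_largest S r \<theta>) r \<in> B} \<in> sets P"
proof -
  have finS: "finite S" using S finite_subset by blast
  have id: "i < d" using S i by auto
  define F where "F j = {r\<in>space P. rk S r j = \<theta> - 1} \<inter> (tr i j -` B \<inter> space P)" for j
  have Fm: "F j \<in> sets P" if "j \<in> S" for j
  proof -
    have "j < d" using that S by auto
    then show ?thesis unfolding F_def using rk_set[OF S] tr_set[OF id _ B] by blast
  qed
  have decomp: "{r\<in>space P. tr i (kth_largest S r \<theta>) r \<in> B} = (\<Union>j\<in>S. F j)"
  proof (intro equalityI subsetI)
    fix r assume r: "r \<in> {r\<in>space P. tr i (kth_largest S r \<theta>) r \<in> B}"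
    let ?c = "kth_largest S r \<theta>"
    have "?c \<in> S" "rk S r ?c = \<theta> - 1" using kth_in[OF finS th] by auto
    then show "r \<in> (\<Union>j\<in>S. F j)" using r unfolding F_def by auto
  next
    fix r assume "r \<in> (\<Union>j\<in>S. F j)"
    then obtain j where j: "j \<in> S" "r \<in> F j" by auto
    then have "kth_largest S r \<theta> = j" using kth_iff[OF finS th] unfolding F_def by auto
    then show "r \<in> {r\<in>space P. tr i (kth_largest S r \<theta>) r \<in> B}" using j unfolding F_def by auto
  qed
  show ?thesis unfolding decomp using Fm finS by (intro sets.finite_UN) auto
qed

lemma space_D: "space D = UNIV"
  using sets_eq_imp_space_eq[OF sD] by simp

lemma space_P_iff: "r \<in> space P \<longleftrightarrow> (\<forall>n. n \<notin> {..<d} \<longrightarrow> r n = undefined)"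
  unfolding pert_def space_PiM PiE_def extensional_def Pi_def space_D by blast

lemma upd_meas: assumes "i < d" shows "(\<lambda>r. r(i := c)) \<in> measurable P P"
proof -
  have eq: "(\<lambda>r::nat\<Rightarrow>real. r(i := c)) = (\<lambda>r n. if n = i then c else r n)"
    by (auto simp: fun_eq_iff)
  have cm: "(\<lambda>r. r n) \<in> measurable P D" if "n < d" for n
    unfolding pert_def using that by (intro measurable_component_singleton) auto
  show ?thesis unfolding eq
    apply (subst (2) pert_def)
    apply (rule measurable_PiM_single')
    subgoal for n using cm[of n] by (cases "n = i") (simp_all add: space_D)
    subgoal using assms space_P_iff by (auto simp: space_PiM PiE_iff space_D extensional_def)
    done
qed

end

locale cgr2 = cgrl +
  fixes \<eta> :: real and L :: "nat \<Rightarrow> real" and \<sigma> :: "nat \<Rightarrow> nat"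
  assumes sb: "bij_betw \<sigma> {..<d} {1..d}"
    and Lmono: "\<And>j k. j < d \<Longrightarrow> k < d \<Longrightarrow> L k < L j \<Longrightarrow> \<sigma> k < \<sigma> j"
begin

definition "Sset i = {j\<in>{..<d}. \<sigma> j \<le> \<sigma> i}"

lemma Sset_sub: "Sset i \<subseteq> {..<d}" unfolding Sset_def by auto
lemma i_Sset: "i < d \<Longrightarrow> i \<in> Sset i" unfolding Sset_def by auto
lemma fin_Sset: "finite (Sset i)" using Sset_sub finite_subset by blast

lemma card_Sset: assumes "i < d" shows "card (Sset i) = \<sigma> i"
proof -
  have "bij_betw \<sigma> (Sset i) {1..\<sigma> i}"
  proof (rule bij_betw_subset[OF sb Sset_sub])
    show "\<sigma> ` Sset i = {1..\<sigma> i}"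
    proof
      show "\<sigma> ` Sset i \<subseteq> {1..\<sigma> i}" using sb unfolding Sset_def bij_betw_def by auto
      show "{1..\<sigma> i} \<subseteq> \<sigma> ` Sset i"
      proof
        fix s assume s: "s \<in> {1..\<sigma> i}"
        have "\<sigma> i \<le> d" using sb assms unfolding bij_betw_def by auto
        then have "s \<in> \<sigma> ` {..<d}" using s sb unfolding bij_betw_def by auto
        then obtain j where "j < d" "\<sigma> j = s" by auto
        then show "s \<in> \<sigma> ` Sset i" using s unfolding Sset_def by auto
      qed
    qed
  qed
  then show ?thesis by (simp add: bij_betw_same_card)
qed

lemma swap_eq: "cgr_swap d \<sigma> i r \<theta> = tr i (kth_largest (Sset i) r \<theta>) r"
  unfolding cgr_swap_def tr_def Sset_def Let_def by simp

abbreviation "act r i \<equiv> ftpl_act d m \<eta> L r i"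

lemma act_set: assumes "i < d" shows "{r\<in>space P. act r i} \<in> sets P"
proof -
  have sc: "Measurable.pred P (\<lambda>r. score \<eta> L r j > score \<eta> L r i)" if "j < d" for j
  proof -
    have "{r\<in>space P. r i - \<eta> * L i < r j - \<eta> * L j} \<in> sets P" using that assms by measurable
    then show ?thesis unfolding pred_def score_def by simp
  qed
  have se: "Measurable.pred P (\<lambda>r. score \<eta> L r j = score \<eta> L r i)" if "j < d" for j
  proof -
    have "{r\<in>space P. r j - \<eta> * L j = r i - \<eta> * L i} \<in> sets P" using that assms by measurable
    then show ?thesis unfolding pred_def score_def by simp
  qed
  have "(\<lambda>r. card {j\<in>{..<d}. score \<eta> L r j > score \<eta> L r i \<or> (score \<eta> L r j = score \<eta> L r i \<and> j < i)})
      \<in> measurable P (count_space UNIV)"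
    by (rule card_meas) (auto intro!: pred_intros_logic(5) pred_intros_logic(3) sc se measurable_const)
  then show ?thesis unfolding ftpl_act_def by (rule nat_fun_set)
qed

lemma act_cong: "i < d \<Longrightarrow> (\<And>k. k < d \<Longrightarrow> r k = r' k) \<Longrightarrow> act r i = act r' i"
  unfolding ftpl_act_def score_def by (simp cong: conj_cong)

end

lemma kth_big:
  assumes "finite S" "card S < \<theta>"
  shows "kth_largest S r \<theta> = (THE j::nat. False)"
proof -
  have "\<not> (j \<in> S \<and> card {k\<in>S. r k > r j \<or> (r k = r j \<and> k < j)} = \<theta> - 1)" for j
  proof
    assume a: "j \<in> S \<and> card {k\<in>S. r k > r j \<or> (r k = r j \<and> k < j)} = \<theta> - 1"
    then have "rk S r j = \<theta> - 1" unfolding rk_def beats_def by simp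
    moreover have "rk S r j < card S" using rk_less[OF assms(1)] a by blast
    ultimately show False using assms(2) by linarith
  qed
  then have e: "(\<lambda>j. j \<in> S \<and> card {k\<in>S. r k > r j \<or> (r k = r j \<and> k < j)} = \<theta> - 1) = (\<lambda>j. False)"
    by blast
  show ?thesis unfolding kth_largest_def by (rule arg_cong[where f=The, OF e])
qed

lemma kth_zero: "kth_largest S r 0 = kth_largest S r 1"
  by (simp add: kth_largest_def)

context cgr2 begin

lemma undef_set: "i < d \<Longrightarrow> {r\<in>space P. r i = undefined} \<in> sets P"
proof -
  assume "i < d"
  then have "(\<lambda>r. r i) \<in> borel_measurable P" by (rule comp_meas)
  then have "(\<lambda>r. r i) -` {undefined} \<inter> space P \<in> sets P" by (rule measurable_sets) simp
  moreover have "(\<lambda>r. r i) -` {undefined} \<inter> space P = {r\<in>space P. r i = undefined}" by auto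
  ultimately show ?thesis by simp
qed

lemma big_case:
  assumes i: "i < d" and c: "\<not> c < d" and r: "r \<in> space P"
  shows "(r i = undefined \<longrightarrow> tr i c r = r(i := undefined))"
    and "(r i \<noteq> undefined \<longrightarrow> tr i c r \<notin> space P)"
    and "\<And>k. k < d \<Longrightarrow> tr i c r k = (r(i := undefined)) k"
proof -
  have rc: "r c = undefined" using r c space_P_iff by auto
  have ci: "c \<noteq> i" using c i by auto
  show "(r i = undefined \<longrightarrow> tr i c r = r(i := undefined))"
    using rc ci by (auto simp: tr_def fun_eq_iff)
  show "(r i \<noteq> undefined \<longrightarrow> tr i c r \<notin> space P)"
    using ci c by (auto simp: tr_def space_P_iff)
  show "\<And>k. k < d \<Longrightarrow> tr i c r k = (r(i := undefined)) k"
    using rc ci c by (auto simp: tr_def)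
qed

lemma swap_slice:
  assumes i: "i < d" and A: "A \<in> sets P"
  shows "{r\<in>space P. cgr_swap d \<sigma> i r \<theta> \<in> A} \<in> sets P"
proof -
  have cS: "1 \<le> card (Sset i)" using i_Sset[OF i] fin_Sset by (metis One_nat_def Suc_leI card_gt_0_iff empty_iff)
  consider "\<theta> = 0" | "1 \<le> \<theta> \<and> \<theta> \<le> card (Sset i)" | "card (Sset i) < \<theta>" by linarith
  then show ?thesis
  proof cases
    case 1
    have "kth_largest (Sset i) r 0 = kth_largest (Sset i) r 1" for r by (rule kth_zero)
    then show ?thesis unfolding swap_eq 1
      using swap_good_set[OF Sset_sub i_Sset[OF i] order_refl cS A] by simp
  next
    case 2
    then show ?thesis unfolding swap_eq
      using swap_good_set[OF Sset_sub i_Sset[OF i] _ _ A] by simp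
  next
    case 3
    define c where "c = (THE j::nat. False)"
    have eq: "cgr_swap d \<sigma> i r \<theta> = tr i c r" for r
      unfolding swap_eq c_def kth_big[OF fin_Sset 3] ..
    show ?thesis
    proof (cases "c < d")
      case True
      have "{r\<in>space P. tr i c r \<in> A} = tr i c -` A \<inter> space P" by auto
      then show ?thesis unfolding eq using tr_set[OF i True A] by simp
    next
      case False
      have "{r\<in>space P. tr i c r \<in> A} = {r\<in>space P. r i = undefined} \<inter> ((\<lambda>r. r(i := undefined)) -` A \<inter> space P)"
      proof (intro equalityI subsetI)
        fix r assume r: "r \<in> {r\<in>space P. tr i c r \<in> A}"
        then have rs: "r \<in> space P" and "tr i c r \<in> space P" using sets.sets_into_space[OF A] by auto
        then have "r i = undefined" using big_case(2)[OF i False rs] by blast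
        then show "r \<in> {r\<in>space P. r i = undefined} \<inter> ((\<lambda>r. r(i := undefined)) -` A \<inter> space P)"
          using big_case(1)[OF i False rs] r rs by auto
      next
        fix r assume r: "r \<in> {r\<in>space P. r i = undefined} \<inter> ((\<lambda>r. r(i := undefined)) -` A \<inter> space P)"
        then show "r \<in> {r\<in>space P. tr i c r \<in> A}" using big_case(1)[OF i False] by auto
      qed
      then show ?thesis unfolding eq
        using undef_set[OF i] measurable_sets[OF upd_meas[OF i] A] by simp
    qed
  qed
qed

lemma act_swap_slice:
  assumes i: "i < d"
  shows "{r\<in>space P. act (cgr_swap d \<sigma> i r \<theta>) i} \<in> sets P"
proof -
  have cS: "1 \<le> card (Sset i)" using i_Sset[OF i] fin_Sset by (metis One_nat_def Suc_leI card_gt_0_iff empty_iff)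
  let ?Y = "{r\<in>space P. act r i}"
  have Y: "?Y \<in> sets P" by (rule act_set[OF i])
  have good: "{r\<in>space P. act (cgr_swap d \<sigma> i r \<theta>) i} = {r\<in>space P. cgr_swap d \<sigma> i r \<theta> \<in> ?Y}"
    if "\<And>r. r \<in> space P \<Longrightarrow> cgr_swap d \<sigma> i r \<theta> \<in> space P"
    using that by auto
  consider "\<theta> \<le> card (Sset i)" | "card (Sset i) < \<theta>" by linarith
  then show ?thesis
  proof cases
    case 1
    have "cgr_swap d \<sigma> i r \<theta> \<in> space P" if r: "r \<in> space P" for r
    proof -
      have "kth_largest (Sset i) r \<theta> \<in> Sset i"
      proof (cases "\<theta> = 0")
        case True
        then show ?thesis using kth_in[OF fin_Sset order_refl cS] kth_zero by simp
      next
        case False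
        then show ?thesis using kth_in[OF fin_Sset _ 1] by simp
      qed
      then have "kth_largest (Sset i) r \<theta> < d" using Sset_sub by auto
      then show ?thesis unfolding swap_eq using measurable_space[OF tr_meas[OF i] r] by simp
    qed
    then show ?thesis using good swap_slice[OF i Y] by simp
  next
    case 2
    define c where "c = (THE j::nat. False)"
    have eq: "cgr_swap d \<sigma> i r \<theta> = tr i c r" for r
      unfolding swap_eq c_def kth_big[OF fin_Sset 2] ..
    show ?thesis
    proof (cases "c < d")
      case True
      then have "cgr_swap d \<sigma> i r \<theta> \<in> space P" if "r \<in> space P" for r
        unfolding eq using measurable_space[OF tr_meas[OF i True] that] by simp
      then show ?thesis using good swap_slice[OF i Y] by simp
    next
      case False
      have "{r\<in>space P. act (tr i c r) i} = (\<lambda>r. r(i := undefined)) -` ?Y \<inter> space P"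
      proof -
        have "act (tr i c r) i = act (r(i := undefined)) i" if "r \<in> space P" for r
          by (rule act_cong[OF i]) (rule big_case(3)[OF i False that])
        moreover have "r(i := undefined) \<in> space P" if "r \<in> space P" for r
          using measurable_space[OF upd_meas[OF i] that] by simp
        ultimately show ?thesis by auto
      qed
      then show ?thesis unfolding eq using measurable_sets[OF upd_meas[OF i] Y] by simp
    qed
  qed
qed

end

lemma emeasure_distr':
  assumes pre: "\<And>A. A \<in> sets N \<Longrightarrow> f -` A \<inter> space M \<in> sets M" and A: "A \<in> sets N"
  shows "emeasure (distr M N f) A = emeasure M (f -` A \<inter> space M)"
  unfolding distr_def
proof (rule emeasure_measure_of_sigma[OF sets.sigma_algebra_axioms _ _ A])
  show "positive (sets N) (\<lambda>A. emeasure M (f -` A \<inter> space M))"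
    unfolding positive_def by simp
  show "countably_additive (sets N) (\<lambda>A. emeasure M (f -` A \<inter> space M))"
    unfolding countably_additive_def
  proof (intro allI impI)
    fix F :: "nat \<Rightarrow> _" assume F: "range F \<subseteq> sets N" "disjoint_family F" "\<Union> (range F) \<in> sets N"
    have "(\<Sum>i. emeasure M (f -` F i \<inter> space M)) = emeasure M (\<Union>i. f -` F i \<inter> space M)"
    proof (rule suminf_emeasure)
      show "range (\<lambda>i. f -` F i \<inter> space M) \<subseteq> sets M" using F(1) pre by auto
      show "disjoint_family (\<lambda>i. f -` F i \<inter> space M)"
        using F(2) unfolding disjoint_family_on_def by auto
    qed
    also have "(\<Union>i. f -` F i \<inter> space M) = f -` (\<Union>(range F)) \<inter> space M" by auto
    finally show "(\<Sum>i. emeasure M (f -` F i \<inter> space M)) = emeasure M (f -` \<Union> (range F) \<inter> space M)" .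
  qed
qed

context cgrl begin

abbreviation "Th \<equiv> measure_pmf (pmf_of_set {1..m})"
abbreviation "Q \<equiv> P \<Otimes>\<^sub>M Th"
abbreviation "SQ \<equiv> stream_space Q"
abbreviation "Om \<equiv> cgr_space d m D"

lemma Om_def: "Om = P \<Otimes>\<^sub>M SQ" unfolding cgr_space_def ..

lemma probQ: "prob_space Q"
  by (intro prob_space_pair probP prob_space_measure_pmf)

lemma probSQ: "prob_space SQ"
  by (rule prob_space.prob_space_stream_space[OF probQ])

lemma probOm: "prob_space Om"
  unfolding Om_def by (intro prob_space_pair probP probSQ)

lemma space_Q: "space Q = space P \<times> UNIV"
  by (simp add: space_pair_measure)

lemma sets_Q_slices:
  assumes X: "X \<subseteq> space Q" and sl: "\<And>\<theta>. {r\<in>space P. (r, \<theta>) \<in> X} \<in> sets P"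
  shows "X \<in> sets Q"
proof -
  have "X = (\<Union>\<theta>\<in>UNIV. {r\<in>space P. (r, \<theta>) \<in> X} \<times> {\<theta>})" using X space_Q by auto
  also have "\<dots> \<in> sets Q"
    by (rule sets.countable_UN) (auto intro!: pair_measureI sl)
  finally show ?thesis .
qed

lemma emeasure_Q:
  assumes X: "X \<in> sets Q"
  shows "emeasure Q X = (\<Sum>\<theta>\<in>{1..m}. emeasure P {r\<in>space P. (r, \<theta>) \<in> X} * ennreal (1 / real m))"
proof -
  interpret PQ: pair_sigma_finite P Th
    by (intro pair_sigma_finite.intro prob_space_imp_sigma_finite probP prob_space_measure_pmf)
  have ne: "{1..m} \<noteq> {}" using m1 by auto
  have "emeasure Q X = (\<integral>\<^sup>+\<theta>. emeasure P ((\<lambda>r. (r, \<theta>)) -` X) \<partial>Th)"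
    by (rule PQ.emeasure_pair_measure_alt2[OF X])
  also have "\<dots> = (\<Sum>\<theta>\<in>{1..m}. emeasure P ((\<lambda>r. (r, \<theta>)) -` X) * pmf (pmf_of_set {1..m}) \<theta>)"
    using ne by (subst nn_integral_measure_pmf_finite) auto
  also have "\<dots> = (\<Sum>\<theta>\<in>{1..m}. emeasure P {r\<in>space P. (r, \<theta>) \<in> X} * ennreal (1 / real m))"
  proof (rule sum.cong[OF refl])
    fix \<theta> assume th: "\<theta> \<in> {1..m}"
    have "(\<lambda>r. (r, \<theta>)) -` X = {r\<in>space P. (r, \<theta>) \<in> X}"
      using sets.sets_into_space[OF X] space_Q by auto
    moreover have "pmf (pmf_of_set {1..m}) \<theta> = 1 / real m" using ne th by simp
    ultimately show "emeasure P ((\<lambda>r. (r, \<theta>)) -` X) * pmf (pmf_of_set {1..m}) \<theta> =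
        emeasure P {r\<in>space P. (r, \<theta>) \<in> X} * ennreal (1 / real m)" by simp
  qed
  finally show ?thesis .
qed

lemma snth_set: "X \<in> sets Q \<Longrightarrow> {s\<in>space SQ. s !! k \<in> X} \<in> sets SQ"
proof -
  assume X: "X \<in> sets Q"
  have "{s\<in>space SQ. s !! k \<in> X} = (\<lambda>s. s !! k) -` X \<inter> space SQ" by auto
  then show ?thesis using measurable_sets[OF measurable_snth X] by simp
qed

lemma snth_emeasure:
  assumes X: "X \<in> sets Q"
  shows "emeasure SQ {s\<in>space SQ. s !! k \<in> X} = emeasure Q X"
proof -
  have e1: "emeasure SQ (space SQ) = 1" by (rule prob_space.emeasure_space_1[OF probSQ])
  have e2: "emeasure Q (space Q) = 1" by (rule prob_space.emeasure_space_1[OF probQ])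
  have e1': "emeasure (stream_space (P \<Otimes>\<^sub>M measure_pmf (pmf_of_set {Suc 0..m})))
     (space (stream_space (P \<Otimes>\<^sub>M measure_pmf (pmf_of_set {Suc 0..m})))) = 1"
    using e1 by simp
  note es = prob_space.emeasure_stream_space[OF probQ snth_set[OF X]]
  show ?thesis
proof (induction k)
  case 0
  have "emeasure SQ {s\<in>space SQ. s !! 0 \<in> X}
      = (\<integral>\<^sup>+t. emeasure SQ {x\<in>space SQ. t ## x \<in> {s\<in>space SQ. s !! 0 \<in> X}} \<partial>Q)"
    by (rule es)
  also have "\<dots> = (\<integral>\<^sup>+t. indicator X t \<partial>Q)"
  proof (rule nn_integral_cong)
    fix t assume t: "t \<in> space Q"
    have "{x\<in>space SQ. t ## x \<in> {s\<in>space SQ. s !! 0 \<in> X}} = (if t \<in> X then space SQ else {})"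
      using t by (auto simp: space_stream_space)
    then show "emeasure SQ {x\<in>space SQ. t ## x \<in> {s\<in>space SQ. s !! 0 \<in> X}} = indicator X t"
      by (simp add: e1 e1')
  qed
  also have "\<dots> = emeasure Q X" by (rule nn_integral_indicator[OF X])
  finally show ?case .
next
  case (Suc k)
  have "emeasure SQ {s\<in>space SQ. s !! Suc k \<in> X}
      = (\<integral>\<^sup>+t. emeasure SQ {x\<in>space SQ. t ## x \<in> {s\<in>space SQ. s !! Suc k \<in> X}} \<partial>Q)"
    by (rule es)
  also have "\<dots> = (\<integral>\<^sup>+t. emeasure Q X \<partial>Q)"
  proof (rule nn_integral_cong)
    fix t assume t: "t \<in> space Q"
    have "{x\<in>space SQ. t ## x \<in> {s\<in>space SQ. s !! Suc k \<in> X}} = {s\<in>space SQ. s !! k \<in> X}"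
      using t by (auto simp: space_stream_space)
    then show "emeasure SQ {x\<in>space SQ. t ## x \<in> {s\<in>space SQ. s !! Suc k \<in> X}} = emeasure Q X"
      using Suc by simp
  qed
  also have "\<dots> = emeasure Q X * emeasure Q (space Q)" by (rule nn_integral_const)
  also have "\<dots> = emeasure Q X" unfolding e2 by (rule mult_1_right)
  finally show ?case .
qed
qed

lemma Om_emeasure:
  assumes X: "X \<in> sets Q"
  shows "emeasure Om {\<omega>\<in>space Om. snd \<omega> !! k \<in> X} = emeasure Q X"
proof -
  interpret Pp: prob_space P by (rule probP)
  interpret SQp: prob_space SQ by (rule probSQ)
  have "{\<omega>\<in>space Om. snd \<omega> !! k \<in> X} = space P \<times> {s\<in>space SQ. s !! k \<in> X}"
    unfolding Om_def by (auto simp: space_pair_measure)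
  then show ?thesis
    using SQp.emeasure_pair_measure_Times[OF sets.top[of P] snth_set[OF X]] snth_emeasure[OF X]
    unfolding Om_def by (simp add: Pp.emeasure_space_1)
qed

lemma Om_fubini:
  assumes f: "f \<in> borel_measurable P" and g: "g \<in> borel_measurable SQ"
  shows "(\<integral>\<^sup>+\<omega>. f (fst \<omega>) * g (snd \<omega>) \<partial>Om) = (\<integral>\<^sup>+x. f x \<partial>P) * (\<integral>\<^sup>+s. g s \<partial>SQ)"
proof -
  interpret SQp: prob_space SQ by (rule probSQ)
  have m: "(\<lambda>\<omega>. f (fst \<omega>) * g (snd \<omega>)) \<in> borel_measurable (P \<Otimes>\<^sub>M SQ)"
    using f g by measurable
  have "(\<integral>\<^sup>+\<omega>. f (fst \<omega>) * g (snd \<omega>) \<partial>Om) = (\<integral>\<^sup>+x. \<integral>\<^sup>+s. f x * g s \<partial>SQ \<partial>P)"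
    unfolding Om_def using SQp.nn_integral_fst[OF m] by simp
  also have "\<dots> = (\<integral>\<^sup>+x. f x * (\<integral>\<^sup>+s. g s \<partial>SQ) \<partial>P)"
    using g by (simp add: nn_integral_cmult)
  also have "\<dots> = (\<integral>\<^sup>+x. f x \<partial>P) * (\<integral>\<^sup>+s. g s \<partial>SQ)"
    using f by (simp add: nn_integral_multc)
  finally show ?thesis .
qed

end

context cgrl begin

lemma geom:
  assumes H: "H \<in> sets Q" and p: "measure Q H > 0"
  shows "(\<integral>\<^sup>+s. of_nat (Suc (LEAST k. s !! k \<in> H)) \<partial>SQ) = ennreal (1 / measure Q H)"
proof -
  interpret Qp: prob_space Q by (rule probQ)
  interpret SQp: prob_space SQ by (rule probSQ)
  define q where "q = 1 - measure Q H"
  have q0: "0 \<le> q" "q < 1" using p Qp.prob_le_1[of H] unfolding q_def by auto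
  define A where "A n = {s\<in>space SQ. \<forall>k<n. s !! k \<notin> H}" for n
  have A_eq: "A n = space SQ - (\<Union>k\<in>{..<n}. {s\<in>space SQ. s !! k \<in> H})" for n
    unfolding A_def by auto
  have Am: "A n \<in> sets SQ" for n
    unfolding A_eq using snth_set[OF H] by (intro sets.Diff sets.finite_UN) auto
  have compl: "emeasure Q (space Q - H) = ennreal q"
    unfolding q_def using Qp.prob_compl[OF H] Qp.emeasure_eq_measure by simp
  have Aem: "emeasure SQ (A n) = ennreal (q ^ n)" for n
  proof (induction n)
    case 0
    have "A 0 = space SQ" unfolding A_def by auto
    then show ?case using SQp.emeasure_space_1 by (metis ennreal_1 power_0)
  next
    case (Suc n)
    have "emeasure SQ (A (Suc n)) = (\<integral>\<^sup>+t. emeasure SQ {x\<in>space SQ. t ## x \<in> A (Suc n)} \<partial>Q)"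
      by (rule Qp.emeasure_stream_space[OF Am])
    also have "\<dots> = (\<integral>\<^sup>+t. ennreal (q ^ n) * indicator (space Q - H) t \<partial>Q)"
    proof (rule nn_integral_cong)
      fix t assume t: "t \<in> space Q"
      have "{x\<in>space SQ. t ## x \<in> A (Suc n)} = (if t \<in> H then {} else A n)"
        using t unfolding A_def by (auto simp: space_stream_space less_Suc_eq_0_disj)
      then show "emeasure SQ {x\<in>space SQ. t ## x \<in> A (Suc n)} = ennreal (q ^ n) * indicator (space Q - H) t"
        using t Suc by (auto simp: indicator_def)
    qed
    also have "\<dots> = ennreal (q ^ n) * emeasure Q (space Q - H)"
      by (rule nn_integral_cmult_indicator[OF sets.Diff[OF sets.top H]])
    also have "\<dots> = ennreal (q ^ Suc n)"
      unfolding compl using q0 by (simp add: ennreal_mult[symmetric] mult.commute)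
    finally show ?case .
  qed
  define N where "N = {s\<in>space SQ. \<forall>k. s !! k \<notin> H}"
  have N_eq: "N = space SQ - (\<Union>k. {s\<in>space SQ. s !! k \<in> H})" unfolding N_def by auto
  have Nm: "N \<in> sets SQ"
    unfolding N_eq using snth_set[OF H] by (intro sets.Diff sets.countable_UN) auto
  have "measure SQ N \<le> 0"
  proof (rule LIMSEQ_le_const[OF LIMSEQ_realpow_zero[OF q0]])
    show "\<exists>N0. \<forall>n\<ge>N0. measure SQ N \<le> q ^ n"
    proof (intro exI allI impI)
      fix n :: nat
      have "N \<subseteq> A n" unfolding N_def A_def by auto
      then have "measure SQ N \<le> measure SQ (A n)" using Am Nm by (intro SQp.finite_measure_mono) auto
      also have "measure SQ (A n) = q ^ n" using Aem[of n] q0 SQp.emeasure_eq_measure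
        by (metis ennreal_inj zero_le_power measure_nonneg)
      finally show "measure SQ N \<le> q ^ n" .
    qed
  qed
  then have N0: "emeasure SQ N = 0" using SQp.emeasure_eq_measure measure_nonneg[of SQ N]
    by (metis antisym ennreal_0)
  have predH: "(\<lambda>s. s !! k \<in> H) \<in> measurable SQ (count_space UNIV)" for k
    using snth_set[OF H] unfolding pred_def by simp
  have Mm: "(\<lambda>s. Suc (LEAST k. s !! k \<in> H)) \<in> measurable SQ (count_space UNIV)"
    using measurable_Least[OF predH] by (rule measurable_compose) simp
  have "(\<integral>\<^sup>+s. of_nat (Suc (LEAST k. s !! k \<in> H)) \<partial>SQ)
      = (\<Sum>t. emeasure SQ {s\<in>space SQ. t < Suc (LEAST k. s !! k \<in> H)})"
    by (rule nn_integral_nat_function[OF Mm])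
  also have "\<dots> = (\<Sum>t. ennreal (q ^ t))"
  proof (rule suminf_cong)
    fix t
    have "emeasure SQ {s\<in>space SQ. t < Suc (LEAST k. s !! k \<in> H)} = emeasure SQ (A t)"
    proof (rule emeasure_eq_AE)
      show "{s\<in>space SQ. t < Suc (LEAST k. s !! k \<in> H)} \<in> sets SQ" by (rule nat_fun_set[OF Mm])
      show "A t \<in> sets SQ" by (rule Am)
      have "AE s in SQ. s \<notin> N" using Nm N0 by (intro AE_not_in) auto
      then show "AE s in SQ. (s \<in> {s\<in>space SQ. t < Suc (LEAST k. s !! k \<in> H)}) = (s \<in> A t)"
      proof eventually_elim
        case (elim s)
        show ?case
        proof (cases "s \<in> space SQ")
          case True
          then obtain k0 where k0: "s !! k0 \<in> H" using elim unfolding N_def by auto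
          have "t < Suc (LEAST k. s !! k \<in> H) \<longleftrightarrow> (\<forall>k<t. s !! k \<notin> H)"
          proof
            assume "t < Suc (LEAST k. s !! k \<in> H)"
            then have "k < (LEAST k. s !! k \<in> H)" if "k < t" for k using that by simp
            then show "\<forall>k<t. s !! k \<notin> H" using not_less_Least by blast
          next
            assume a: "\<forall>k<t. s !! k \<notin> H"
            have "s !! (LEAST k. s !! k \<in> H) \<in> H" using k0 by (rule LeastI)
            then have "\<not> (LEAST k. s !! k \<in> H) < t" using a by blast
            then show "t < Suc (LEAST k. s !! k \<in> H)" by simp
          qed
          then show ?thesis using True unfolding A_def by simp
        next
          case False then show ?thesis unfolding A_def by simp
        qed
      qed
    qed
    then show "emeasure SQ {s\<in>space SQ. t < Suc (LEAST k. s !! k \<in> H)} = ennreal (q ^ t)"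
      using Aem by simp
  qed
  also have "\<dots> = ennreal (\<Sum>t. q ^ t)"
    using q0 by (intro suminf_ennreal2 summable_geometric) auto
  also have "\<dots> = ennreal (1 / measure Q H)"
    using q0 by (simp add: suminf_geometric q_def)
  finally show ?thesis .
qed

end

locale cgr3 = cgr2 +
  assumes eta: "\<eta> > 0"
begin

lemma Sset_card_gt: "i < d \<Longrightarrow> m < \<sigma> i \<Longrightarrow> m < card (Sset i)"
  using card_Sset by simp

lemma rk_prob:
  assumes i: "i < d" and th: "1 \<le> \<theta>" "\<theta> \<le> \<sigma> i"
  shows "emeasure P {r\<in>space P. rk (Sset i) r i = \<theta> - 1} = ennreal (1 / real (\<sigma> i))"
proof -
  interpret Pp: prob_space P by (rule probP)
  have th': "\<theta> \<le> card (Sset i)" using th card_Sset[OF i] by simp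
  have sp: "{r\<in>space P. tr i (kth_largest (Sset i) r \<theta>) r \<in> space P} = space P"
  proof -
    have "tr i (kth_largest (Sset i) r \<theta>) r \<in> space P" if r: "r \<in> space P" for r
    proof -
      have "kth_largest (Sset i) r \<theta> < d" using kth_in[OF fin_Sset th(1) th'] Sset_sub by auto
      then show ?thesis using measurable_space[OF tr_meas[OF i] r] by simp
    qed
    then show ?thesis by auto
  qed
  have "1 = of_nat (\<sigma> i) * emeasure P {r\<in>space P. r \<in> space P \<and> rk (Sset i) r i = \<theta> - 1}"
    using core[OF Sset_sub i_Sset[OF i] th(1) th' sets.top] unfolding sp card_Sset[OF i]
    by (simp add: Pp.emeasure_space_1)
  moreover have "{r\<in>space P. r \<in> space P \<and> rk (Sset i) r i = \<theta> - 1} = {r\<in>space P. rk (Sset i) r i = \<theta> - 1}"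
    by auto
  ultimately have e: "1 = of_nat (\<sigma> i) * emeasure P {r\<in>space P. rk (Sset i) r i = \<theta> - 1}" by simp
  define x where "x = measure P {r\<in>space P. rk (Sset i) r i = \<theta> - 1}"
  have "emeasure P {r\<in>space P. rk (Sset i) r i = \<theta> - 1} = ennreal x"
    unfolding x_def by (rule Pp.emeasure_eq_measure)
  then have "1 = ennreal (real (\<sigma> i) * x)"
    using e by (simp add: ennreal_of_nat_eq_real_of_nat ennreal_mult x_def)
  then have "real (\<sigma> i) * x = 1"
    by (metis ennreal_1 ennreal_eq_1 mult_nonneg_nonneg of_nat_0_le_iff measure_nonneg x_def)
  then have "x = 1 / real (\<sigma> i)" using th by (auto simp: field_simps)
  then show ?thesis using \<open>emeasure P _ = ennreal x\<close> by simp
qed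

lemma rk_sum:
  assumes i: "i < d" and A: "A \<in> sets P"
  shows "emeasure P {r\<in>space P. r \<in> A \<and> rk (Sset i) r i < m}
       = (\<Sum>\<theta>\<in>{1..m}. emeasure P {r\<in>space P. r \<in> A \<and> rk (Sset i) r i = \<theta> - 1})"
proof -
  let ?F = "\<lambda>\<theta>. {r\<in>space P. r \<in> A \<and> rk (Sset i) r i = \<theta> - 1}"
  have Fm: "?F \<theta> \<in> sets P" for \<theta>
  proof -
    have "?F \<theta> = A \<inter> {r\<in>space P. rk (Sset i) r i = \<theta> - 1}" by auto
    then show ?thesis using rk_set[OF Sset_sub i] A by auto
  qed
  have eq: "{r\<in>space P. r \<in> A \<and> rk (Sset i) r i < m} = (\<Union>\<theta>\<in>{1..m}. ?F \<theta>)"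
  proof (intro equalityI subsetI)
    fix r assume "r \<in> {r\<in>space P. r \<in> A \<and> rk (Sset i) r i < m}"
    then show "r \<in> (\<Union>\<theta>\<in>{1..m}. ?F \<theta>)"
      by (intro UN_I[of "Suc (rk (Sset i) r i)"]) auto
  next
    fix r assume "r \<in> (\<Union>\<theta>\<in>{1..m}. ?F \<theta>)"
    then show "r \<in> {r\<in>space P. r \<in> A \<and> rk (Sset i) r i < m}" by auto
  qed
  have disj: "disjoint_family_on ?F {1..m}"
    unfolding disjoint_family_on_def by auto
  have "(\<Sum>\<theta>\<in>{1..m}. emeasure P (?F \<theta>)) = emeasure P (\<Union>\<theta>\<in>{1..m}. ?F \<theta>)"
    by (rule sum_emeasure) (use Fm disj in auto)
  then show ?thesis unfolding eq by simp
qed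

lemma event_AE:
  assumes i: "i < d"
  shows "AE r in P. (r \<in> cgr_event d m D \<sigma> i) = (r \<in> space P \<and> rk (Sset i) r i < m)"
  using AE_noties
proof eventually_elim
  case (elim r)
  have "{j\<in>{..<d}. r i \<le> r j \<and> \<sigma> j \<le> \<sigma> i} = insert i {k\<in>Sset i. beats r k i}"
  proof (intro equalityI subsetI)
    fix j assume j: "j \<in> {j\<in>{..<d}. r i \<le> r j \<and> \<sigma> j \<le> \<sigma> i}"
    show "j \<in> insert i {k\<in>Sset i. beats r k i}"
    proof (cases "j = i")
      case False
      then have "r j \<noteq> r i" using elim j i unfolding noties_def by auto
      then show ?thesis using j unfolding Sset_def beats_def by auto
    qed simp
  next
    fix j assume "j \<in> insert i {k\<in>Sset i. beats r k i}"
    then show "j \<in> {j\<in>{..<d}. r i \<le> r j \<and> \<sigma> j \<le> \<sigma> i}"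
      using i unfolding Sset_def beats_def by auto
  qed
  moreover have "i \<notin> {k\<in>Sset i. beats r k i}" using beats_irrefl by auto
  moreover have "finite {k\<in>Sset i. beats r k i}" using fin_Sset by auto
  ultimately have "card {j\<in>{..<d}. r i \<le> r j \<and> \<sigma> j \<le> \<sigma> i} = Suc (rk (Sset i) r i)"
    unfolding rk_def by simp
  then show ?case unfolding cgr_event_def by auto
qed

lemma act_rk:
  assumes i: "i < d" and nt: "noties r" and a: "act r i"
  shows "rk (Sset i) r i < m"
proof -
  have "{k\<in>Sset i. beats r k i} \<subseteq>
      {j\<in>{..<d}. score \<eta> L r j > score \<eta> L r i \<or> (score \<eta> L r j = score \<eta> L r i \<and> j < i)}"
  proof
    fix k assume k: "k \<in> {k\<in>Sset i. beats r k i}"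
    then have kd: "k < d" and sk: "\<sigma> k \<le> \<sigma> i" and b: "beats r k i" unfolding Sset_def by auto
    have "k \<noteq> i" using b beats_irrefl by auto
    then have "r k \<noteq> r i" using nt kd i unfolding noties_def by auto
    then have rk: "r k > r i" using b unfolding beats_def by auto
    have "\<not> L i < L k" using Lmono[OF kd i] sk by auto
    then have "\<eta> * L k \<le> \<eta> * L i" using eta by (simp add: mult_left_mono)
    then have "score \<eta> L r k > score \<eta> L r i" using rk unfolding score_def by simp
    then show "k \<in> {j\<in>{..<d}. score \<eta> L r j > score \<eta> L r i \<or> (score \<eta> L r j = score \<eta> L r i \<and> j < i)}"
      using kd by auto
  qed
  then have "rk (Sset i) r i \<le> card {j\<in>{..<d}. score \<eta> L r j > score \<eta> L r i \<or> (score \<eta> L r j = score \<eta> L r i \<and> j < i)}"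
    unfolding rk_def by (intro card_mono) auto
  then show ?thesis using a unfolding ftpl_act_def by simp
qed

lemma Q_swap:
  assumes i: "i < d" and mi: "m < \<sigma> i" and X: "X \<in> sets Q" and B: "B \<in> sets P"
    and sl: "\<And>\<theta>. \<theta> \<in> {1..m} \<Longrightarrow> {r\<in>space P. (r, \<theta>) \<in> X} = {r\<in>space P. cgr_swap d \<sigma> i r \<theta> \<in> B}"
  shows "emeasure Q X = ennreal (real (\<sigma> i) / real m) * emeasure P {r\<in>space P. r \<in> B \<and> rk (Sset i) r i < m}"
proof -
  have "emeasure Q X = (\<Sum>\<theta>\<in>{1..m}. emeasure P {r\<in>space P. (r, \<theta>) \<in> X} * ennreal (1 / real m))"
    by (rule emeasure_Q[OF X])
  also have "\<dots> = (\<Sum>\<theta>\<in>{1..m}. (ennreal (real (\<sigma> i)) * emeasure P {r\<in>space P. r \<in> B \<and> rk (Sset i) r i = \<theta> - 1}) * ennreal (1 / real m))"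
  proof (rule sum.cong[OF refl])
    fix \<theta> assume th: "\<theta> \<in> {1..m}"
    have "emeasure P {r\<in>space P. (r, \<theta>) \<in> X} = emeasure P {r\<in>space P. tr i (kth_largest (Sset i) r \<theta>) r \<in> B}"
      unfolding sl[OF th] swap_eq ..
    also have "\<dots> = of_nat (card (Sset i)) * emeasure P {r\<in>space P. r \<in> B \<and> rk (Sset i) r i = \<theta> - 1}"
      using th mi card_Sset[OF i] by (intro core[OF Sset_sub i_Sset[OF i] _ _ B]) auto
    finally show "emeasure P {r\<in>space P. (r, \<theta>) \<in> X} * ennreal (1 / real m) =
      (ennreal (real (\<sigma> i)) * emeasure P {r\<in>space P. r \<in> B \<and> rk (Sset i) r i = \<theta> - 1}) * ennreal (1 / real m)"
      by (simp add: card_Sset[OF i] ennreal_of_nat_eq_real_of_nat)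
  qed
  also have "\<dots> = (ennreal (real (\<sigma> i)) * ennreal (1 / real m)) * (\<Sum>\<theta>\<in>{1..m}. emeasure P {r\<in>space P. r \<in> B \<and> rk (Sset i) r i = \<theta> - 1})"
    by (simp add: sum_distrib_left sum_distrib_right mult.assoc mult.commute mult.left_commute)
  also have "\<dots> = ennreal (real (\<sigma> i) / real m) * emeasure P {r\<in>space P. r \<in> B \<and> rk (Sset i) r i < m}"
    by (simp add: rk_sum[OF i B] ennreal_mult[symmetric])
  finally show ?thesis .
qed

end

context cgr3 begin

lemma event_set: assumes i: "i < d" shows "cgr_event d m D \<sigma> i \<in> sets P"
proof -
  have le: "Measurable.pred P (\<lambda>r. r i \<le> r j)" if "j < d" for j
  proof -
    have "{r\<in>space P. r i \<le> r j} \<in> sets P" using that i by measurable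
    then show ?thesis unfolding pred_def by simp
  qed
  have "(\<lambda>r. card {j\<in>{..<d}. r i \<le> r j \<and> \<sigma> j \<le> \<sigma> i}) \<in> measurable P (count_space UNIV)"
    by (rule card_meas) (auto intro!: pred_intros_logic(3) le measurable_const)
  then show ?thesis unfolding cgr_event_def by (rule nat_fun_set)
qed

lemma event_prob:
  assumes i: "i < d" and mi: "m < \<sigma> i"
  shows "emeasure P (cgr_event d m D \<sigma> i) = ennreal (real m / real (\<sigma> i))"
proof -
  have e1: "emeasure P (cgr_event d m D \<sigma> i) = emeasure P {r\<in>space P. r \<in> space P \<and> rk (Sset i) r i < m}"
  proof (rule emeasure_eq_AE)
    show "AE x in P. (x \<in> cgr_event d m D \<sigma> i) = (x \<in> {r\<in>space P. r \<in> space P \<and> rk (Sset i) r i < m})"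
      using event_AE[OF i] by eventually_elim auto
    show "cgr_event d m D \<sigma> i \<in> sets P" by (rule event_set[OF i])
    show "{r\<in>space P. r \<in> space P \<and> rk (Sset i) r i < m} \<in> sets P"
      using rk_set[OF Sset_sub i] nat_fun_set[OF rk_meas[OF Sset_sub i]] by simp
  qed
  also have "\<dots> = (\<Sum>\<theta>\<in>{1..m}. emeasure P {r\<in>space P. r \<in> space P \<and> rk (Sset i) r i = \<theta> - 1})"
    by (rule rk_sum[OF i sets.top])
  also have "\<dots> = (\<Sum>\<theta>\<in>{1..m}. ennreal (1 / real (\<sigma> i)))"
  proof (rule sum.cong[OF refl])
    fix \<theta> assume th: "\<theta> \<in> {1..m}"
    have "{r\<in>space P. r \<in> space P \<and> rk (Sset i) r i = \<theta> - 1} = {r\<in>space P. rk (Sset i) r i = \<theta> - 1}" by auto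
    then show "emeasure P {r\<in>space P. r \<in> space P \<and> rk (Sset i) r i = \<theta> - 1} = ennreal (1 / real (\<sigma> i))"
      using rk_prob[OF i, of \<theta>] th mi by simp
  qed
  also have "\<dots> = ennreal (real m / real (\<sigma> i))"
    by (simp add: ennreal_of_nat_eq_real_of_nat ennreal_mult[symmetric])
  finally show ?thesis .
qed

lemma space_Om: "space Om = space P \<times> streams (space Q)"
  unfolding Om_def by (simp add: space_pair_measure space_stream_space)

lemma part1:
  assumes i: "i < d" and mi: "m < \<sigma> i"
  shows "distr Om P (\<lambda>\<omega>. cgr_swap d \<sigma> i (fst (snd \<omega> !! k)) (snd (snd \<omega> !! k)))
       = uniform_measure P (cgr_event d m D \<sigma> i)"
proof -
  let ?f = "\<lambda>\<omega>. cgr_swap d \<sigma> i (fst (snd \<omega> !! k)) (snd (snd \<omega> !! k))"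
  let ?E = "cgr_event d m D \<sigma> i"
  define XA where "XA A = {x\<in>space Q. cgr_swap d \<sigma> i (fst x) (snd x) \<in> A}" for A
  have XAm: "XA A \<in> sets Q" if A: "A \<in> sets P" for A
  proof (rule sets_Q_slices)
    show "XA A \<subseteq> space Q" unfolding XA_def by auto
    fix \<theta>
    have "{r\<in>space P. (r, \<theta>) \<in> XA A} = {r\<in>space P. cgr_swap d \<sigma> i r \<theta> \<in> A}"
      unfolding XA_def space_Q by auto
    then show "{r\<in>space P. (r, \<theta>) \<in> XA A} \<in> sets P" using swap_slice[OF i A] by simp
  qed
  have pre_eq: "?f -` A \<inter> space Om = space P \<times> {s\<in>space SQ. s !! k \<in> XA A}" for A
    unfolding space_Om XA_def by (auto simp: space_stream_space snth_in)
  have pre: "?f -` A \<inter> space Om \<in> sets Om" if A: "A \<in> sets P" for A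
  proof -
    have "space P \<times> {s\<in>space SQ. s !! k \<in> XA A} \<in> sets Om"
      unfolding Om_def using snth_set[OF XAm[OF A]] by (intro pair_measureI) auto
    then show ?thesis by (simp only: pre_eq)
  qed
  have E: "?E \<in> sets P" by (rule event_set[OF i])
  show ?thesis
  proof (rule measure_eqI)
    show "sets (distr Om P ?f) = sets (uniform_measure P ?E)" by simp
    fix A assume "A \<in> sets (distr Om P ?f)"
    then have A: "A \<in> sets P" by simp
    let ?Y = "emeasure P {r\<in>space P. r \<in> A \<and> rk (Sset i) r i < m}"
    have Ym: "{r\<in>space P. r \<in> A \<and> rk (Sset i) r i < m} \<in> sets P"
    proof -
      have "{r\<in>space P. r \<in> A \<and> rk (Sset i) r i < m} = A \<inter> {r\<in>space P. rk (Sset i) r i < m}" by auto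
      then show ?thesis using A nat_fun_set[OF rk_meas[OF Sset_sub i]] by auto
    qed
    have "emeasure (distr Om P ?f) A = emeasure Om (?f -` A \<inter> space Om)"
      by (rule emeasure_distr'[OF pre A]) simp
    also have "?f -` A \<inter> space Om = {\<omega>\<in>space Om. snd \<omega> !! k \<in> XA A}"
      unfolding space_Om XA_def by (auto simp: space_stream_space snth_in)
    also have "emeasure Om \<dots> = emeasure Q (XA A)" by (rule Om_emeasure[OF XAm[OF A]])
    also have "\<dots> = ennreal (real (\<sigma> i) / real m) * ?Y"
      by (rule Q_swap[OF i mi XAm[OF A] A]) (auto simp: XA_def space_pair_measure)
    finally have L: "emeasure (distr Om P ?f) A = ennreal (real (\<sigma> i) / real m) * ?Y" .
    have "emeasure P (?E \<inter> A) = ?Y"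
    proof (rule emeasure_eq_AE)
      show "AE x in P. (x \<in> ?E \<inter> A) = (x \<in> {r\<in>space P. r \<in> A \<and> rk (Sset i) r i < m})"
        using event_AE[OF i] by eventually_elim auto
    qed (use E A Ym in auto)
    then have R: "emeasure (uniform_measure P ?E) A = ?Y / ennreal (real m / real (\<sigma> i))"
      using emeasure_uniform_measure[OF E A] event_prob[OF i mi] by simp
    have "?Y / ennreal (real m / real (\<sigma> i)) = ?Y * ennreal (real (\<sigma> i) / real m)"
      using mi m1 by (simp add: divide_ennreal_def inverse_ennreal)
    then show "emeasure (distr Om P ?f) A = emeasure (uniform_measure P ?E) A"
      using L R by (simp add: mult.commute)
  qed
qed

end

context cgr3 begin

definition "Hs i = {x\<in>space Q. cgr_hit d m \<eta> L \<sigma> i x}"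
definition "Ya i = {r\<in>space P. act r i}"
definition "Cf i = (if m < \<sigma> i then real (\<sigma> i) / real m else 1)"
definition "Mf i s = Suc (LEAST k. cgr_hit d m \<eta> L \<sigma> i (s !! k))"

lemma Cf_pos: "Cf i > 0" using m1 unfolding Cf_def by auto

lemma Cf_max: "max (real (\<sigma> i) / real m) 1 = Cf i"
  using m1 unfolding Cf_def by (auto simp: field_simps)

lemma Ya_set: "i < d \<Longrightarrow> Ya i \<in> sets P" unfolding Ya_def by (rule act_set)

lemma w_eq: "ftpl_w d m D \<eta> L i = measure P (Ya i)"
  unfolding ftpl_w_def Ya_def ..

lemma Hs_set: assumes i: "i < d" shows "Hs i \<in> sets Q"
proof (rule sets_Q_slices)
  show "Hs i \<subseteq> space Q" unfolding Hs_def by auto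
  fix \<theta>
  show "{r\<in>space P. (r, \<theta>) \<in> Hs i} \<in> sets P"
  proof (cases "m < \<sigma> i")
    case True
    then have "{r\<in>space P. (r, \<theta>) \<in> Hs i} = {r\<in>space P. act (cgr_swap d \<sigma> i r \<theta>) i}"
      unfolding Hs_def cgr_hit_def by (auto simp: space_pair_measure)
    then show ?thesis using act_swap_slice[OF i] by simp
  next
    case False
    then have "{r\<in>space P. (r, \<theta>) \<in> Hs i} = {r\<in>space P. act r i}"
      unfolding Hs_def cgr_hit_def by (auto simp: space_pair_measure)
    then show ?thesis using act_set[OF i] by simp
  qed
qed

lemma Hs_emeasure:
  assumes i: "i < d"
  shows "emeasure Q (Hs i) = ennreal (Cf i) * emeasure P (Ya i)"
proof (cases "m < \<sigma> i")
  case True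
  have sl: "{r\<in>space P. (r, \<theta>) \<in> Hs i} = {r\<in>space P. cgr_swap d \<sigma> i r \<theta> \<in> Ya i}"
    if th: "\<theta> \<in> {1..m}" for \<theta>
  proof -
    have th': "1 \<le> \<theta>" "\<theta> \<le> card (Sset i)" using th True card_Sset[OF i] by auto
    have "cgr_swap d \<sigma> i r \<theta> \<in> space P" if r: "r \<in> space P" for r
    proof -
      have "kth_largest (Sset i) r \<theta> < d" using kth_in[OF fin_Sset th'] Sset_sub by auto
      then show ?thesis unfolding swap_eq using measurable_space[OF tr_meas[OF i] r] by simp
    qed
    then show ?thesis unfolding Hs_def Ya_def cgr_hit_def using True by (auto simp: space_pair_measure)
  qed
  have "emeasure Q (Hs i) = ennreal (real (\<sigma> i) / real m) * emeasure P {r\<in>space P. r \<in> Ya i \<and> rk (Sset i) r i < m}"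
    by (rule Q_swap[OF i True Hs_set[OF i] Ya_set[OF i] sl])
  also have "emeasure P {r\<in>space P. r \<in> Ya i \<and> rk (Sset i) r i < m} = emeasure P (Ya i)"
  proof (rule emeasure_eq_AE)
    show "AE x in P. (x \<in> {r\<in>space P. r \<in> Ya i \<and> rk (Sset i) r i < m}) = (x \<in> Ya i)"
      using AE_noties
    proof eventually_elim
      case (elim r)
      then show ?case using act_rk[OF i elim] unfolding Ya_def by auto
    qed
    have "{r\<in>space P. r \<in> Ya i \<and> rk (Sset i) r i < m} = Ya i \<inter> {r\<in>space P. rk (Sset i) r i < m}" by auto
    then show "{r\<in>space P. r \<in> Ya i \<and> rk (Sset i) r i < m} \<in> sets P"
      using Ya_set[OF i] nat_fun_set[OF rk_meas[OF Sset_sub i]] by auto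
    show "Ya i \<in> sets P" by (rule Ya_set[OF i])
  qed
  finally show ?thesis using True unfolding Cf_def by simp
next
  case False
  interpret Thp: prob_space Th by (rule prob_space_measure_pmf)
  interpret Pp: prob_space P by (rule probP)
  interpret Ths: sigma_finite_measure Th by (rule prob_space_imp_sigma_finite[OF prob_space_measure_pmf])
  have "Hs i = Ya i \<times> space Th"
    unfolding Hs_def Ya_def cgr_hit_def using False by (auto simp: space_pair_measure)
  then have "emeasure Q (Hs i) = emeasure P (Ya i) * emeasure Th (space Th)"
    using sigma_finite_measure.emeasure_pair_measure_Times[OF prob_space_imp_sigma_finite[OF prob_space_measure_pmf] Ya_set[OF i] sets.top] by simp
  then show ?thesis using False unfolding Cf_def by (simp add: prob_space.emeasure_space_1[OF prob_space_measure_pmf])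
qed

lemma Hs_measure: "i < d \<Longrightarrow> measure Q (Hs i) = Cf i * ftpl_w d m D \<eta> L i"
proof -
  assume i: "i < d"
  interpret Pp: prob_space P by (rule probP)
  have "emeasure Q (Hs i) = ennreal (Cf i * measure P (Ya i))"
    using Hs_emeasure[OF i] Cf_pos[of i] by (simp add: Pp.emeasure_eq_measure ennreal_mult)
  then have "measure Q (Hs i) = Cf i * measure P (Ya i)"
    using Cf_pos[of i] unfolding measure_def by simp
  then show ?thesis unfolding w_eq .
qed

lemma Mf_meas[measurable]: assumes i: "i < d" shows "Mf i \<in> measurable SQ (count_space UNIV)"
proof -
  have p: "(\<lambda>s. cgr_hit d m \<eta> L \<sigma> i (s !! k)) \<in> measurable SQ (count_space UNIV)" for k
  proof -
    have "{s\<in>space SQ. cgr_hit d m \<eta> L \<sigma> i (s !! k)} = {s\<in>space SQ. s !! k \<in> Hs i}"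
      unfolding Hs_def by (auto simp: space_stream_space snth_in)
    then show ?thesis using snth_set[OF Hs_set[OF i]] unfolding pred_def by simp
  qed
  show ?thesis unfolding Mf_def using measurable_Least[OF p] by (rule measurable_compose) simp
qed

lemma EM:
  assumes i: "i < d" and w: "ftpl_w d m D \<eta> L i > 0"
  shows "(\<integral>\<^sup>+s. ennreal (real (Mf i s)) \<partial>SQ) = ennreal (1 / (Cf i * ftpl_w d m D \<eta> L i))"
proof -
  have pos: "measure Q (Hs i) > 0" using Hs_measure[OF i] Cf_pos[of i] w by simp
  have "(\<integral>\<^sup>+s. ennreal (real (Mf i s)) \<partial>SQ) = (\<integral>\<^sup>+s. of_nat (Suc (LEAST k. s !! k \<in> Hs i)) \<partial>SQ)"
  proof (rule nn_integral_cong)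
    fix s assume s: "s \<in> space SQ"
    then have "(\<lambda>k. cgr_hit d m \<eta> L \<sigma> i (s !! k)) = (\<lambda>k. s !! k \<in> Hs i)"
      unfolding Hs_def by (auto simp: space_stream_space snth_in)
    then show "ennreal (real (Mf i s)) = of_nat (Suc (LEAST k. s !! k \<in> Hs i))"
      unfolding Mf_def by (simp add: ennreal_of_nat_eq_real_of_nat)
  qed
  also have "\<dots> = ennreal (1 / measure Q (Hs i))" by (rule geom[OF Hs_set[OF i] pos])
  finally show ?thesis using Hs_measure[OF i] by simp
qed

end

lemma harm_bound:
  fixes m d :: nat
  assumes m1: "1 \<le> m" and md: "m \<le> d"
  shows "(\<Sum>s\<in>{1..d}. if m < s then real m / real s else 1) \<le> real m + real m * ln (real d / real m)"
  using md
proof (induction d rule: dec_induct)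
  case base
  have "(\<Sum>s\<in>{1..m}. if m < s then real m / real s else 1) = (\<Sum>s\<in>{1..m}. 1::real)"
    by (rule sum.cong) auto
  then show ?case using m1 by simp
next
  case (step n)
  have n0: "0 < real n" using step m1 by auto
  have "(\<Sum>s\<in>{1..Suc n}. if m < s then real m / real s else 1)
      = (\<Sum>s\<in>{1..n}. if m < s then real m / real s else 1) + real m / real (Suc n)"
    using step by simp
  also have "\<dots> \<le> real m + real m * ln (real n / real m) + real m / real (Suc n)"
    using step by simp
  also have "real m / real (Suc n) \<le> real m * (ln (real (Suc n)) - ln (real n))"
  proof -
    have "ln (real n / real (Suc n)) \<le> real n / real (Suc n) - 1"
      using n0 by (intro ln_le_minus_one) auto
    also have "\<dots> = - (1 / real (Suc n))" by (simp add: field_simps)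
    finally have "1 / real (Suc n) \<le> ln (real (Suc n)) - ln (real n)"
      using n0 by (simp add: ln_div)
    then have "real m * (1 / real (Suc n)) \<le> real m * (ln (real (Suc n)) - ln (real n))"
      by (intro mult_left_mono) auto
    then show ?thesis by simp
  qed
  also have "real m + real m * ln (real n / real m) + real m * (ln (real (Suc n)) - ln (real n))
      = real m + real m * ln (real (Suc n) / real m)"
    using n0 m1 by (simp add: ln_div algebra_simps)
  finally show ?case by simp
qed

context cgr3 begin

lemma exists_act: "\<exists>i<d. act r i"
proof -
  let ?sc = "\<lambda>j. score \<eta> L r j"
  have "0 < d" using m1 md by simp
  then have dne: "{..<d} \<noteq> {}" by auto
  define s where "s = Max (?sc ` {..<d})"
  define I where "I = {j\<in>{..<d}. ?sc j = s}"
  have "s \<in> ?sc ` {..<d}" unfolding s_def using dne by (intro Max_in) auto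
  then have Ine: "I \<noteq> {}" unfolding I_def by auto
  have finI: "finite I" unfolding I_def by auto
  define i where "i = Min I"
  have iI: "i \<in> I" unfolding i_def using Ine finI by (intro Min_in)
  have "{j\<in>{..<d}. ?sc j > ?sc i \<or> (?sc j = ?sc i \<and> j < i)} = {}"
  proof (rule ccontr)
    assume "{j\<in>{..<d}. ?sc j > ?sc i \<or> (?sc j = ?sc i \<and> j < i)} \<noteq> {}"
    then obtain j where j: "j < d" "?sc j > ?sc i \<or> (?sc j = ?sc i \<and> j < i)" by auto
    have "?sc j \<le> s" unfolding s_def using j(1) by (intro Max_ge) auto
    moreover have "?sc i = s" using iI unfolding I_def by auto
    ultimately have "?sc j = s" "j < i" using j(2) by auto
    then have "j \<in> I" using j(1) unfolding I_def by auto
    then have "i \<le> j" unfolding i_def using finI by (intro Min_le)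
    then show False using \<open>j < i\<close> by simp
  qed
  then have "act r i" unfolding ftpl_act_def using m1 by (simp only: card.empty)
  moreover have "i < d" using iI unfolding I_def by auto
  ultimately show ?thesis by auto
qed

lemma est_eq: "cgr_est d m \<eta> L \<sigma> i \<omega> = Cf i * real (Mf i (snd \<omega>))"
  unfolding cgr_est_def cgr_M_def Mf_def Cf_max ..

lemma fun_meas: assumes i: "i < d"
  shows "(\<lambda>s. ennreal (c * real (Mf i s))) \<in> borel_measurable SQ"
  by (rule measurable_compose[OF Mf_meas[OF i]]) simp

lemma part2:
  assumes i: "i < d" and w: "0 < ftpl_w d m D \<eta> L i"
  shows "(\<integral>\<^sup>+ \<omega>. ennreal (cgr_est d m \<eta> L \<sigma> i \<omega>)
            \<partial>uniform_measure Om {\<omega> \<in> space Om. act (fst \<omega>) i})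
        = ennreal (1 / ftpl_w d m D \<eta> L i)"
proof -
  interpret Pp: prob_space P by (rule probP)
  interpret SQp: prob_space SQ by (rule probSQ)
  let ?w = "ftpl_w d m D \<eta> L i"
  let ?A = "{\<omega> \<in> space Om. act (fst \<omega>) i}"
  have Aeq: "?A = Ya i \<times> space SQ"
    unfolding Ya_def space_Om by (auto simp: space_stream_space)
  have "Ya i \<times> space SQ \<in> sets Om" unfolding Om_def using Ya_set[OF i] by (intro pair_measureI) auto
  then have Am: "?A \<in> sets Om" by (simp only: Aeq)
  have Yw: "emeasure P (Ya i) = ennreal ?w" unfolding w_eq by (rule Pp.emeasure_eq_measure)
  have "emeasure Om (Ya i \<times> space SQ) = emeasure P (Ya i) * emeasure SQ (space SQ)"
    unfolding Om_def by (rule SQp.emeasure_pair_measure_Times[OF Ya_set[OF i] sets.top])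
  then have AO: "emeasure Om ?A = ennreal ?w"
    unfolding Aeq Yw SQp.emeasure_space_1 by simp
  have fm: "(\<lambda>s. ennreal (Cf i * real (Mf i s))) \<in> borel_measurable SQ" by (rule fun_meas[OF i])
  have estm: "(\<lambda>\<omega>. ennreal (cgr_est d m \<eta> L \<sigma> i \<omega>)) \<in> borel_measurable Om"
    unfolding est_eq Om_def by (rule measurable_compose[OF measurable_snd fm])
  have "(\<integral>\<^sup>+ \<omega>. ennreal (cgr_est d m \<eta> L \<sigma> i \<omega>) \<partial>uniform_measure Om ?A)
      = (\<integral>\<^sup>+ \<omega>. ennreal (cgr_est d m \<eta> L \<sigma> i \<omega>) * indicator ?A \<omega> \<partial>Om) / emeasure Om ?A"
    by (rule nn_integral_uniform_measure[OF estm Am])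
  also have "(\<integral>\<^sup>+ \<omega>. ennreal (cgr_est d m \<eta> L \<sigma> i \<omega>) * indicator ?A \<omega> \<partial>Om)
      = (\<integral>\<^sup>+ \<omega>. indicator (Ya i) (fst \<omega>) * ennreal (Cf i * real (Mf i (snd \<omega>))) \<partial>Om)"
  proof (rule nn_integral_cong)
    fix \<omega> assume "\<omega> \<in> space Om"
    then have "indicator ?A \<omega> = (indicator (Ya i) (fst \<omega>) :: ennreal)"
      unfolding Aeq space_Om by (auto simp: indicator_def space_stream_space Ya_def)
    then show "ennreal (cgr_est d m \<eta> L \<sigma> i \<omega>) * indicator ?A \<omega> = indicator (Ya i) (fst \<omega>) * ennreal (Cf i * real (Mf i (snd \<omega>)))"
      unfolding est_eq by (simp add: mult.commute)
  qed
  also have "\<dots> = (\<integral>\<^sup>+ x. indicator (Ya i) x \<partial>P) * (\<integral>\<^sup>+ s. ennreal (Cf i * real (Mf i s)) \<partial>SQ)"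
    by (rule Om_fubini) (use Ya_set[OF i] fm in auto)
  also have "(\<integral>\<^sup>+ s. ennreal (Cf i * real (Mf i s)) \<partial>SQ) = ennreal (Cf i) * (\<integral>\<^sup>+ s. ennreal (real (Mf i s)) \<partial>SQ)"
  proof -
    have fm1: "(\<lambda>s. ennreal (real (Mf i s))) \<in> borel_measurable SQ"
      by (rule measurable_compose[OF Mf_meas[OF i]]) simp
    have "(\<integral>\<^sup>+ s. ennreal (Cf i * real (Mf i s)) \<partial>SQ) = (\<integral>\<^sup>+ s. ennreal (Cf i) * ennreal (real (Mf i s)) \<partial>SQ)"
      using Cf_pos[of i] by (simp add: ennreal_mult)
    also have "\<dots> = ennreal (Cf i) * (\<integral>\<^sup>+ s. ennreal (real (Mf i s)) \<partial>SQ)"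
      by (rule nn_integral_cmult[OF fm1])
    finally show ?thesis .
  qed
  also have "\<dots> = ennreal (Cf i) * ennreal (1 / (Cf i * ?w))" unfolding EM[OF i w] ..
  also have "(\<integral>\<^sup>+ x. indicator (Ya i) x \<partial>P) = ennreal ?w" using Ya_set[OF i] Yw by simp
  also have "ennreal ?w * (ennreal (Cf i) * ennreal (1 / (Cf i * ?w))) = ennreal 1"
  proof -
    have "?w * (Cf i * (1 / (Cf i * ?w))) = 1" using w Cf_pos[of i] by (simp add: field_simps)
    then show ?thesis using w Cf_pos[of i] by (simp add: ennreal_mult[symmetric])
  qed
  also have "ennreal 1 / emeasure Om ?A = ennreal (1 / ?w)"
    unfolding AO using w by (rule divide_ennreal[OF zero_le_one])
  finally show ?thesis .
qed

end

context cgr3 begin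

definition "bnd i = (if m < \<sigma> i then real m / real (\<sigma> i) else 1)"

lemma Mtot_bound:
  assumes w: "\<omega> \<in> space Om"
  shows "ennreal (real (cgr_Mtot d m \<eta> L \<sigma> \<omega>))
       \<le> (\<Sum>i<d. indicator (Ya i) (fst \<omega>) * ennreal (real (Mf i (snd \<omega>))))"
proof -
  let ?r = "fst \<omega>"
  have r: "?r \<in> space P" using w space_Om by auto
  let ?T = "{cgr_M d m \<eta> L \<sigma> i \<omega> | i. i < d \<and> act ?r i}"
  have Teq: "?T = (\<lambda>i. cgr_M d m \<eta> L \<sigma> i \<omega>) ` {i. i < d \<and> act ?r i}" by auto
  have finT: "finite ?T" unfolding Teq by auto
  have neT: "?T \<noteq> {}" using exists_act[of ?r] by auto
  have "Max ?T \<in> ?T" using finT neT by (rule Max_in)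
  then obtain i0 where i0: "i0 < d" "act ?r i0" "Max ?T = cgr_M d m \<eta> L \<sigma> i0 \<omega>" by auto
  have "ennreal (real (cgr_Mtot d m \<eta> L \<sigma> \<omega>)) = indicator (Ya i0) ?r * ennreal (real (Mf i0 (snd \<omega>)))"
    using i0 r unfolding cgr_Mtot_def Ya_def by (simp add: cgr_M_def Mf_def)
  also have "\<dots> \<le> (\<Sum>i<d. indicator (Ya i) ?r * ennreal (real (Mf i (snd \<omega>))))"
    by (rule member_le_sum) (use i0 in auto)
  finally show ?thesis .
qed

lemma term_bound:
  assumes i: "i < d"
  shows "emeasure P (Ya i) * (\<integral>\<^sup>+s. ennreal (real (Mf i s)) \<partial>SQ) \<le> ennreal (bnd i)"
proof -
  interpret Pp: prob_space P by (rule probP)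
  have Yw: "emeasure P (Ya i) = ennreal (ftpl_w d m D \<eta> L i)" unfolding w_eq by (rule Pp.emeasure_eq_measure)
  show ?thesis
  proof (cases "ftpl_w d m D \<eta> L i > 0")
    case False
    then have "ftpl_w d m D \<eta> L i = 0" unfolding w_eq using measure_nonneg[of P "Ya i"] by linarith
    then show ?thesis unfolding Yw by simp
  next
    case True
    have "ftpl_w d m D \<eta> L i * (1 / (Cf i * ftpl_w d m D \<eta> L i)) = bnd i"
      using True m1 unfolding Cf_def bnd_def by (auto simp: field_simps)
    then have "ennreal (ftpl_w d m D \<eta> L i) * ennreal (1 / (Cf i * ftpl_w d m D \<eta> L i)) = ennreal (bnd i)"
      using True Cf_pos[of i] by (simp add: ennreal_mult[symmetric])
    then show ?thesis unfolding Yw EM[OF i True] by simp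
  qed
qed

lemma part3:
  "(\<integral>\<^sup>+ \<omega>. ennreal (real (cgr_Mtot d m \<eta> L \<sigma> \<omega>)) \<partial>Om) \<le> ennreal (real m + real m * ln (real d / real m))"
proof -
  have tm: "(\<lambda>\<omega>. indicator (Ya i) (fst \<omega>) * ennreal (real (Mf i (snd \<omega>)))) \<in> borel_measurable Om"
    if i: "i < d" for i
  proof -
    have fi: "indicator (Ya i) \<in> borel_measurable P" using Ya_set[OF i] by (rule borel_measurable_indicator)
    have fm1: "(\<lambda>s. ennreal (real (Mf i s))) \<in> borel_measurable SQ"
      by (rule measurable_compose[OF Mf_meas[OF i]]) simp
    show ?thesis unfolding Om_def
      by (rule borel_measurable_times_ennreal[OF measurable_compose[OF measurable_fst fi] measurable_compose[OF measurable_snd fm1]])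
  qed
  have "(\<integral>\<^sup>+ \<omega>. ennreal (real (cgr_Mtot d m \<eta> L \<sigma> \<omega>)) \<partial>Om)
      \<le> (\<integral>\<^sup>+ \<omega>. (\<Sum>i<d. indicator (Ya i) (fst \<omega>) * ennreal (real (Mf i (snd \<omega>)))) \<partial>Om)"
    by (rule nn_integral_mono) (rule Mtot_bound)
  also have "\<dots> = (\<Sum>i<d. (\<integral>\<^sup>+ \<omega>. indicator (Ya i) (fst \<omega>) * ennreal (real (Mf i (snd \<omega>))) \<partial>Om))"
    by (rule nn_integral_sum) (use tm in auto)
  also have "\<dots> = (\<Sum>i<d. emeasure P (Ya i) * (\<integral>\<^sup>+s. ennreal (real (Mf i s)) \<partial>SQ))"
  proof (rule sum.cong[OF refl])
    fix i assume "i \<in> {..<d}"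
    then have i: "i < d" by simp
    have fm1: "(\<lambda>s. ennreal (real (Mf i s))) \<in> borel_measurable SQ"
      by (rule measurable_compose[OF Mf_meas[OF i]]) simp
    show "(\<integral>\<^sup>+ \<omega>. indicator (Ya i) (fst \<omega>) * ennreal (real (Mf i (snd \<omega>))) \<partial>Om)
        = emeasure P (Ya i) * (\<integral>\<^sup>+s. ennreal (real (Mf i s)) \<partial>SQ)"
      using Om_fubini[OF borel_measurable_indicator[OF Ya_set[OF i]] fm1] Ya_set[OF i] by simp
  qed
  also have "\<dots> \<le> (\<Sum>i<d. ennreal (bnd i))"
    by (rule sum_mono) (rule term_bound, simp)
  also have "\<dots> = ennreal (\<Sum>i<d. bnd i)"
    by (rule sum_ennreal) (auto simp: bnd_def)
  also have "(\<Sum>i<d. bnd i) = (\<Sum>s\<in>{1..d}. if m < s then real m / real s else 1)"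
    unfolding bnd_def by (rule sum.reindex_bij_betw[OF sb])
  also have "ennreal \<dots> \<le> ennreal (real m + real m * ln (real d / real m))"
    by (rule ennreal_leI[OF harm_bound[OF m1 md]])
  finally show ?thesis .
qed

end

theorem lemma7:
  fixes d m :: nat and D :: "real measure" and \<eta> :: real
    and L :: "nat \<Rightarrow> real" and \<sigma> :: "nat \<Rightarrow> nat"
  assumes "1 \<le> m" and "m \<le> d"
    and "prob_space D" and "sets D = sets borel"
    and "\<And>x. emeasure D {x} = 0"
    and "\<eta> > 0"
    and "bij_betw \<sigma> {..<d} {1..d}"
    and "\<And>j k. j < d \<Longrightarrow> k < d \<Longrightarrow> L k < L j \<Longrightarrow> \<sigma> k < \<sigma> j"
  shows
    "(\<forall>i<d. m < \<sigma> i \<longrightarrow> (\<forall>k.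
        distr (cgr_space d m D) (pert d D) (\<lambda>\<omega>. cgr_swap d \<sigma> i (fst (snd \<omega> !! k)) (snd (snd \<omega> !! k)))
        = uniform_measure (pert d D) (cgr_event d m D \<sigma> i)))
   \<and> (\<forall>i<d. 0 < ftpl_w d m D \<eta> L i \<longrightarrow>
        (\<integral>\<^sup>+ \<omega>. ennreal (cgr_est d m \<eta> L \<sigma> i \<omega>)
            \<partial>uniform_measure (cgr_space d m D) {\<omega> \<in> space (cgr_space d m D). ftpl_act d m \<eta> L (fst \<omega>) i})
        = ennreal (1 / ftpl_w d m D \<eta> L i))
   \<and> (\<integral>\<^sup>+ \<omega>. ennreal (real (cgr_Mtot d m \<eta> L \<sigma> \<omega>)) \<partial>cgr_space d m D)
        \<le> ennreal (real m + real m * ln (real d / real m))"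
proof -
  interpret c: cgr3 d m D \<eta> L \<sigma>
    by (rule cgr3.intro[OF cgr2.intro[OF cgrl.intro cgr2_axioms.intro] cgr3_axioms.intro]) (use assms in auto)
  show ?thesis
  proof (intro conjI allI impI)
    fix i k assume "i < d" "m < \<sigma> i"
    then show "distr (cgr_space d m D) (pert d D) (\<lambda>\<omega>. cgr_swap d \<sigma> i (fst (snd \<omega> !! k)) (snd (snd \<omega> !! k)))
        = uniform_measure (pert d D) (cgr_event d m D \<sigma> i)" by (rule c.part1)
  next
    fix i assume "i < d" "0 < ftpl_w d m D \<eta> L i"
    then show "(\<integral>\<^sup>+ \<omega>. ennreal (cgr_est d m \<eta> L \<sigma> i \<omega>)
            \<partial>uniform_measure (cgr_space d m D) {\<omega> \<in> space (cgr_space d m D). ftpl_act d m \<eta> L (fst \<omega>) i})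
        = ennreal (1 / ftpl_w d m D \<eta> L i)" by (rule c.part2)
  next
    show "(\<integral>\<^sup>+ \<omega>. ennreal (real (cgr_Mtot d m \<eta> L \<sigma> \<omega>)) \<partial>cgr_space d m D)
        \<le> ennreal (real m + real m * ln (real d / real m))" by (rule c.part3)
  qed
qed


end
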